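(* Assume the Standing Setting and let $\theta\in\mathbb{R}^{\mathfrak d}$ and $\Theta^1,\Theta^2\in C([0,\infty),\mathbb{R}^{\mathfrak d})$ satisfy for all $t\in[0,\infty)$, $s\in[t,\infty)$, $k\in\{1,2\}$ that $\Theta^k_t=\theta-\int_0^t\mathcal G(\Theta^k_u)\,\mathrm du$ and $\mathbf D^{\Theta^k_t}\subseteq\mathbf D^{\Theta^k_s}$. Then $\Theta^1_t=\Theta^2_t$ for all $t\in[0,\infty)$.
   Context: Standing Setting: Let $d,H,\mathfrak d\in\mathbb{N}$ with $\mathfrak d=dH+2H+1$, let $a\in\mathbb{R}$, $b\in(a,\infty)$, $f\in C([a,b]^d,\mathbb{R})$, and let $p\colon[a,b]^d\to[0,\infty)$ be bounded and measurable. Let $\lambda$ be Lebesgue measure on $\mathbb{R}^d$ and $\|\cdot\|$ the Euclidean norm. For $\theta=(\theta_1,\dots,\theta_{\mathfrak d})\in\mathbb{R}^{\mathfrak d}$, $i\in\{1,\dots,H\}$, $j\in\{1,\dots,d\}$ write $w^\theta_{i,j}=\theta_{(i-1)d+j}$, $b^\theta_i=\theta_{Hd+i}$, $v^\theta_i=\theta_{H(d+1)+i}$, $c^\theta=\theta_{\mathfrak d}$. Define $\mathcal N^\theta(x)=c^\theta+\sum_{i=1}^H v^\theta_i\max\{b^\theta_i+\sum_{j=1}^d w^\theta_{i,j}x_j,0\}$ for $x\in\mathbb{R}^d$ and the risk $\mathcal L(\theta)=\int_{[a,b]^d}(f(y)-\mathcal N^\theta(y))^2p(y)\,\lambda(\mathrm{d}y)$.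 Let $\mathfrak R_r\in C^1(\mathbb{R},\mathbb{R})$, $r\in\mathbb{N}$, satisfy for all $x\in\mathbb{R}$ that $\lim_{r\to\infty}\big(|\mathfrak R_r(x)-\max\{x,0\}|+|(\mathfrak R_r)'(x)-\mathbb 1_{(0,\infty)}(x)|\big)=0$ and $\sup_{r\in\mathbb{N}}\sup_{y\in[-|x|,|x|]}|(\mathfrak R_r)'(y)|<\infty$, and let $\mathfrak L_r(\theta)=\int_{[a,b]^d}\big(f(y)-c^\theta-\sum_{i=1}^H v^\theta_i\,\mathfrak R_r(b^\theta_i+\sum_{j=1}^d w^\theta_{i,j}y_j)\big)^2p(y)\,\lambda(\mathrm{d}y)$. Let $\mathcal G=(\mathcal G_1,\dots,\mathcal G_{\mathfrak d})\colon\mathbb{R}^{\mathfrak d}\to\mathbb{R}^{\mathfrak d}$ satisfy $\mathcal G(\theta)=\lim_{r\to\infty}(\nabla\mathfrak L_r)(\theta)$ for every $\theta$ at which this limit exists. For $\theta\in\mathbb{R}^{\mathfrak d}$, $i\in\{1,\dots,H\}$ let $I_i^\theta=\{x\in[a,b]^d\colon b^\theta_i+\sum_{j=1}^d w^\theta_{i,j}x_j>0\}$ and let $\mathbf D^\theta=\{i\in\{1,\dots,H\}\colon |b^\theta_i|+\sum_{j=1}^d|w^\theta_{i,j}|=0\}$ (the set of degenerate hidden neurons). For $\varepsilon>0$, $B_\varepsilon(\theta)=\{\vartheta\in\mathbb{R}^{\mathfrak d}\colon\|\theta-\vartheta\|<\varepsilon\}$. *)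

theory Defs
  imports "HOL-Analysis.Analysis"
begin

text \<open>Parameters theta in R^dd are represented as functions nat => real whose
  components 1..dd are the coordinates and which vanish outside {1..dd}.
  Inputs x in R^d are functions nat => real with coordinates x 1, ..., x d.\<close>

definition pdim :: "nat \<Rightarrow> nat \<Rightarrow> nat" where
  "pdim d H = d * H + 2 * H + 1"

definition param_space :: "nat \<Rightarrow> (nat \<Rightarrow> real) set" where
  "param_space n = {v. \<forall>i. i \<notin> {1..n} \<longrightarrow> v i = 0}"

definition wt :: "nat \<Rightarrow> (nat \<Rightarrow> real) \<Rightarrow> nat \<Rightarrow> nat \<Rightarrow> real" where
  "wt d \<theta> i j = \<theta> ((i - 1) * d + j)"

definition bs :: "nat \<Rightarrow> nat \<Rightarrow> (nat \<Rightarrow> real) \<Rightarrow> nat \<Rightarrow> real" where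
  "bs d H \<theta> i = \<theta> (H * d + i)"

definition vs :: "nat \<Rightarrow> nat \<Rightarrow> (nat \<Rightarrow> real) \<Rightarrow> nat \<Rightarrow> real" where
  "vs d H \<theta> i = \<theta> (H * (d + 1) + i)"

definition cc :: "nat \<Rightarrow> nat \<Rightarrow> (nat \<Rightarrow> real) \<Rightarrow> real" where
  "cc d H \<theta> = \<theta> (pdim d H)"

definition cube :: "nat \<Rightarrow> real \<Rightarrow> real \<Rightarrow> (nat \<Rightarrow> real) set" where
  "cube d a b = PiE {1..d} (\<lambda>_. {a..b})"

definition lebd :: "nat \<Rightarrow> (nat \<Rightarrow> real) measure" where
  "lebd d = PiM {1..d} (\<lambda>_. lborel)"

definition smooth_risk ::
  "nat \<Rightarrow> nat \<Rightarrow> real \<Rightarrow> real \<Rightarrow> ((nat \<Rightarrow> real) \<Rightarrow> real) \<Rightarrow> ((nat \<Rightarrow> real) \<Rightarrow> real)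
   \<Rightarrow> (real \<Rightarrow> real) \<Rightarrow> (nat \<Rightarrow> real) \<Rightarrow> real" where
  "smooth_risk d H a b f p Rr \<theta> =
     set_lebesgue_integral (lebd d) (cube d a b)
       (\<lambda>y. (f y - cc d H \<theta>
              - (\<Sum>i=1..H. vs d H \<theta> i * Rr (bs d H \<theta> i + (\<Sum>j=1..d. wt d \<theta> i j * y j))))\<^sup>2
            * p y)"

definition grad :: "((nat \<Rightarrow> real) \<Rightarrow> real) \<Rightarrow> (nat \<Rightarrow> real) \<Rightarrow> nat \<Rightarrow> real" where
  "grad F \<theta> i = deriv (\<lambda>s. F (\<theta>(i := s))) (\<theta> i)"

definition degen :: "nat \<Rightarrow> nat \<Rightarrow> (nat \<Rightarrow> real) \<Rightarrow> nat set" where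
  "degen d H \<theta> = {i \<in> {1..H}. \<bar>bs d H \<theta> i\<bar> + (\<Sum>j=1..d. \<bar>wt d \<theta> i j\<bar>) = 0}"

end

theory Submission
  imports Defs
begin


lemma quot_bound:
  fixes g g' :: "real \<Rightarrow> real"
  assumes der: "\<And>s. (g has_real_derivative g' s) (at s)"
    and bnd: "\<And>s. \<bar>s - x\<bar> \<le> 1 \<Longrightarrow> \<bar>g' s\<bar> \<le> B"
    and h: "h \<noteq> 0" "\<bar>h\<bar> \<le> 1"
  shows "\<bar>(g (x + h) - g x) / h\<bar> \<le> B"
proof (cases "h > 0")
  case True
  obtain z where z: "x < z" "z < x + h" "g (x+h) - g x = (x + h - x) * g' z"
    using MVT2[of x "x+h" g g'] True der by auto
  have "\<bar>g' z\<bar> \<le> B" using z h by (intro bnd) auto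
  then show ?thesis using z True by simp
next
  case False
  then have hn: "h < 0" using h by auto
  obtain z where z: "x + h < z" "z < x" "g x - g (x+h) = (x - (x + h)) * g' z"
    using MVT2[of "x+h" x g g'] hn der by auto
  have "\<bar>g' z\<bar> \<le> B" using z h by (intro bnd) auto
  moreover have "(g (x + h) - g x) / h = g' z" using z hn
    by (simp add: field_simps)
  ultimately show ?thesis by simp
qed

lemma deriv_integral:
  fixes M :: "'a measure" and g g' :: "real \<Rightarrow> 'a \<Rightarrow> real"
  assumes fin: "finite_measure M"
    and meas: "\<And>s. g s \<in> borel_measurable M" "\<And>s. g' s \<in> borel_measurable M"
    and gint: "\<And>s. integrable M (g s)"
    and der: "\<And>s y. y \<in> space M \<Longrightarrow> ((\<lambda>s. g s y) has_real_derivative g' s y) (at s)"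
    and bnd: "\<And>s y. y \<in> space M \<Longrightarrow> \<bar>s - x\<bar> \<le> 1 \<Longrightarrow> \<bar>g' s y\<bar> \<le> B"
  shows "((\<lambda>s. \<integral>y. g s y \<partial>M) has_real_derivative (\<integral>y. g' x y \<partial>M)) (at x)"
  unfolding DERIV_def tendsto_at_iff_sequentially
proof (intro allI impI)
  fix X :: "nat \<Rightarrow> real"
  assume X0: "\<forall>i. X i \<in> UNIV - {0}" and Xl: "X \<longlonglongrightarrow> 0"
  interpret finite_measure M by (rule fin)
  obtain N where N: "\<And>i. i \<ge> N \<Longrightarrow> \<bar>X i\<bar> \<le> 1"
    using Xl unfolding LIMSEQ_def dist_real_def
    by (metis diff_zero le_less zero_less_one)
  have eq: "((\<lambda>h. ((\<integral>y. g (x + h) y \<partial>M) - (\<integral>y. g x y \<partial>M)) / h) \<circ> X) i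
      = (\<integral>y. (g (x + X i) y - g x y) / X i \<partial>M)" for i
    using gint by (simp add: integral_diff)
  show "((\<lambda>h. ((\<integral>y. g (x + h) y \<partial>M) - (\<integral>y. g x y \<partial>M)) / h) \<circ> X) \<longlonglongrightarrow> (\<integral>y. g' x y \<partial>M)"
    unfolding eq
  proof (rule LIMSEQ_offset[where k=N], rule integral_dominated_convergence[where w="\<lambda>_. B"])
    show "g' x \<in> borel_measurable M" by (rule meas)
    show "(\<lambda>y. (g (x + X (i + N)) y - g x y) / X (i + N)) \<in> borel_measurable M" for i
      using meas(1) by measurable
    show "integrable M (\<lambda>_. B)" by simp
    show "AE y in M. (\<lambda>i. (g (x + X (i + N)) y - g x y) / X (i + N)) \<longlonglongrightarrow> g' x y"
    proof (rule AE_I2)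
      fix y assume y: "y \<in> space M"
      have "((\<lambda>h. (g (x + h) y - g x y) / h) \<longlongrightarrow> g' x y) (at 0)"
        using der[OF y, of x] unfolding DERIV_def .
      then have "((\<lambda>h. (g (x + h) y - g x y) / h) \<circ> (\<lambda>i. X (i + N))) \<longlonglongrightarrow> g' x y"
        unfolding tendsto_at_iff_sequentially using X0 Xl LIMSEQ_ignore_initial_segment[OF Xl, of N]
        by auto
      then show "(\<lambda>i. (g (x + X (i + N)) y - g x y) / X (i + N)) \<longlonglongrightarrow> g' x y"
        by (simp add: comp_def)
    qed
    show "AE y in M. norm ((g (x + X (i + N)) y - g x y) / X (i + N)) \<le> B" for i
    proof (rule AE_I2)
      fix y assume y: "y \<in> space M"
      show "norm ((g (x + X (i + N)) y - g x y) / X (i + N)) \<le> B"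
        using quot_bound[of "\<lambda>s. g s y" "\<lambda>s. g' s y" x B "X (i+N)"] der[OF y] bnd[OF y] X0 N[of "i+N"]
        by auto
    qed
  qed
qed


abbreviation MC :: "nat \<Rightarrow> real \<Rightarrow> real \<Rightarrow> (nat \<Rightarrow> real) measure" where
  "MC d a b \<equiv> restrict_space (lebd d) (cube d a b)"

lemma space_lebd: "space (lebd d) = PiE {1..d} (\<lambda>_. UNIV)"
  unfolding lebd_def by (simp add: space_PiM)

lemma cube_sets: "cube d a b \<in> sets (lebd d)"
  unfolding lebd_def cube_def by (rule sets_PiM_I_finite) auto

lemma cube_sub: "cube d a b \<subseteq> space (lebd d)"
  unfolding space_lebd cube_def by (auto simp: PiE_def)

lemma space_MC: "space (MC d a b) = cube d a b"
  using cube_sub by (simp add: space_restrict_space Int_absorb1 Int_commute)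

lemma emeasure_cube: "emeasure (lebd d) (cube d a b) = (\<Prod>i\<in>{1..d}. emeasure lborel {a..b})"
proof -
  interpret product_sigma_finite "\<lambda>_. lborel" by standard
  show ?thesis unfolding lebd_def cube_def by (rule emeasure_PiM) auto
qed

lemma finite_MC: "finite_measure (MC d a b)"
proof (rule finite_measureI)
  have "emeasure (MC d a b) (space (MC d a b)) = emeasure (lebd d) (cube d a b)"
    using cube_sets cube_sub by (simp add: space_MC emeasure_restrict_space)
  also have "\<dots> \<noteq> \<infinity>" unfolding emeasure_cube by (simp add: power_eq_top_ennreal_iff emeasure_lborel_Icc_eq)
  finally show "emeasure (MC d a b) (space (MC d a b)) \<noteq> \<infinity>" .
qed

lemma comp_meas_lebd: "j \<in> {1..d} \<Longrightarrow> (\<lambda>y. y j) \<in> borel_measurable (lebd d)"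
  unfolding lebd_def using measurable_component_singleton[of j "{1..d}" "\<lambda>_. lborel"]
  by (simp add: measurable_lborel1)

lemma comp_meas: "j \<in> {1..d} \<Longrightarrow> (\<lambda>y. y j) \<in> borel_measurable (MC d a b)"
  by (intro measurable_restrict_space1 comp_meas_lebd)

lemma id_meas: "(\<lambda>y. y) \<in> borel_measurable (lebd d)"
proof (rule measurable_coordinatewise_then_product)
  fix i :: nat
  show "(\<lambda>x. x i) \<in> borel_measurable (lebd d)"
  proof (cases "i \<in> {1..d}")
    case True then show ?thesis by (rule comp_meas_lebd)
  next
    case False
    have "\<And>w. w \<in> space (lebd d) \<Longrightarrow> w i = undefined"
      using False by (auto simp: space_lebd PiE_def extensional_def)
    then show ?thesis
      by (subst measurable_cong[where g="\<lambda>x. undefined"]) auto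
  qed
qed

lemma cont_meas:
  assumes "continuous_on (cube d a b) f"
  shows "(f :: (nat \<Rightarrow> real) \<Rightarrow> real) \<in> borel_measurable (MC d a b)"
proof -
  have "f \<in> borel_measurable (restrict_space borel (cube d a b))"
    by (rule borel_measurable_continuous_on_restrict[OF assms])
  moreover have "(\<lambda>y. y) \<in> measurable (MC d a b) (restrict_space borel (cube d a b))"
    by (rule measurable_restrict_space3[OF id_meas]) auto
  ultimately show ?thesis using measurable_comp by (metis comp_id fun.map_ident)
qed

lemma set_int_MC:
  "set_lebesgue_integral (lebd d) (cube d a b) g = integral\<^sup>L (MC d a b) (g :: _ \<Rightarrow> real)"
  unfolding set_lebesgue_integral_def
  by (subst integral_restrict_space) (use cube_sets cube_sub in \<open>auto simp: Int_absorb2\<close>)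

lemma bounded_integrable:
  assumes "g \<in> borel_measurable (MC d a b)" "\<And>y. y \<in> cube d a b \<Longrightarrow> \<bar>g y\<bar> \<le> B"
  shows "integrable (MC d a b) (g :: _ \<Rightarrow> real)"
proof -
  interpret finite_measure "MC d a b" by (rule finite_MC)
  show ?thesis by (rule integrable_const_bound[where B=B]) (use assms in \<open>auto simp: space_MC\<close>)
qed

lemma cube_comp: "y \<in> cube d a b \<Longrightarrow> j \<in> {1..d} \<Longrightarrow> y j \<in> {a..b}"
  unfolding cube_def by auto

lemma cube_comp_bound: "y \<in> cube d a b \<Longrightarrow> j \<in> {1..d} \<Longrightarrow> \<bar>y j\<bar> \<le> \<bar>a\<bar> + \<bar>b\<bar>"
  using cube_comp[of y d a b j] by auto


definition zz :: "nat \<Rightarrow> nat \<Rightarrow> (nat \<Rightarrow> real) \<Rightarrow> nat \<Rightarrow> (nat \<Rightarrow> real) \<Rightarrow> real" where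
  "zz d H \<theta> i y = bs d H \<theta> i + (\<Sum>j=1..d. wt d \<theta> i j * y j)"

definition NN :: "nat \<Rightarrow> nat \<Rightarrow> (real \<Rightarrow> real) \<Rightarrow> (nat \<Rightarrow> real) \<Rightarrow> (nat \<Rightarrow> real) \<Rightarrow> real" where
  "NN d H \<sigma> \<theta> y = cc d H \<theta> + (\<Sum>i=1..H. vs d H \<theta> i * \<sigma> (zz d H \<theta> i y))"

definition DN :: "nat \<Rightarrow> nat \<Rightarrow> (real \<Rightarrow> real) \<Rightarrow> (real \<Rightarrow> real) \<Rightarrow> (nat \<Rightarrow> real) \<Rightarrow> nat \<Rightarrow> (nat \<Rightarrow> real) \<Rightarrow> real" where
  "DN d H \<sigma> \<sigma>' \<theta> k y = (if k = pdim d H then 1 else 0) +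
     (\<Sum>i=1..H. (if k = H*(d+1)+i then \<sigma> (zz d H \<theta> i y) else 0)
        + vs d H \<theta> i * \<sigma>' (zz d H \<theta> i y) *
          ((if H*d+i = k then 1 else 0) + (\<Sum>j=1..d. (if (i-1)*d+j = k then 1 else 0) * y j)))"

lemma upd_deriv: "((\<lambda>s. (\<theta>(k:=s)) m) has_real_derivative (if m = k then 1 else 0)) (at s)"
  by (cases "m = k") auto

lemma zz_deriv:
  "((\<lambda>s. zz d H (\<theta>(k:=s)) i y) has_real_derivative
      ((if H*d+i = k then 1 else 0) + (\<Sum>j=1..d. (if (i-1)*d+j = k then 1 else 0) * y j))) (at s)"
  unfolding zz_def bs_def wt_def
  by (rule derivative_eq_intros upd_deriv DERIV_sum refl | simp)+

lemma NN_deriv: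
  assumes "\<And>x. (\<sigma> has_real_derivative \<sigma>' x) (at x)"
  shows "((\<lambda>s. NN d H \<sigma> (\<theta>(k:=s)) y) has_real_derivative DN d H \<sigma> \<sigma>' (\<theta>(k:=s)) k y) (at s)"
proof -
  have c: "((\<lambda>s. cc d H (\<theta>(k:=s))) has_real_derivative (if k = pdim d H then 1 else 0)) (at s)"
    unfolding cc_def using upd_deriv[of \<theta> k "pdim d H" s] by (auto simp: eq_commute)
  have v: "((\<lambda>s. vs d H (\<theta>(k:=s)) i) has_real_derivative (if k = H*(d+1)+i then 1 else 0)) (at s)" for i
    unfolding vs_def using upd_deriv[of \<theta> k "H*(d+1)+i" s] by (auto simp: eq_commute)
  have zs: "((\<lambda>s. \<sigma> (zz d H (\<theta>(k:=s)) i y)) has_real_derivative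
      \<sigma>' (zz d H (\<theta>(k:=s)) i y) * ((if H*d+i = k then 1 else 0) + (\<Sum>j=1..d. (if (i-1)*d+j = k then 1 else 0) * y j))) (at s)" for i
    using DERIV_chain2[OF assms zz_deriv] by simp
  have "((\<lambda>s. NN d H \<sigma> (\<theta>(k:=s)) y) has_real_derivative
     (if k = pdim d H then 1 else 0) + (\<Sum>i=1..H. (if k = H*(d+1)+i then 1 else 0) * \<sigma> (zz d H (\<theta>(k:=s)) i y)
       + vs d H (\<theta>(k:=s)) i * (\<sigma>' (zz d H (\<theta>(k:=s)) i y) * ((if H*d+i = k then 1 else 0) + (\<Sum>j=1..d. (if (i-1)*d+j = k then 1 else 0) * y j))))) (at s)"
    unfolding NN_def
    apply (intro DERIV_add c DERIV_sum)
    apply (rule DERIV_cong[OF DERIV_mult[OF v zs]])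
    apply (simp add: algebra_simps)
    done
  then show ?thesis
    by (rule DERIV_cong) (unfold DN_def, intro arg_cong2[where f="(+)"] refl sum.cong, auto)
qed


lemma cube_compact: "compact (cube d a b)"
proof -
  have eq: "cube d a b = PiE UNIV (\<lambda>i. if i \<in> {1..d} then {a..b} else {undefined})"
    unfolding cube_def by (auto simp: PiE_def extensional_def Pi_def split: if_splits)
  have "compactin (product_topology (\<lambda>i. euclidean) UNIV)
          (PiE UNIV (\<lambda>i. if i \<in> {1..d} then {a..b} else {undefined::real}))"
    by (subst compactin_PiE) (auto simp: compactin_euclidean_iff)
  then have "compactin euclidean (PiE UNIV (\<lambda>i. if i \<in> {1..d} then {a..b} else {undefined::real}))"
    by (simp add: euclidean_product_topology)
  then show ?thesis unfolding eq compactin_euclidean_iff .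
qed

lemma cont_bounded_cube:
  assumes "continuous_on (cube d a b) (f :: _ \<Rightarrow> real)"
  shows "\<exists>B. \<forall>y\<in>cube d a b. \<bar>f y\<bar> \<le> B"
proof -
  have "compact (f ` cube d a b)" by (rule compact_continuous_image[OF assms cube_compact])
  then obtain B where "\<forall>z\<in>f ` cube d a b. norm z \<le> B"
    using compact_imp_bounded bounded_iff by metis
  then show ?thesis by auto
qed

lemma cont_bounded_interval:
  assumes "continuous_on UNIV (\<sigma> :: real \<Rightarrow> real)"
  shows "\<exists>B. \<forall>u. \<bar>u\<bar> \<le> Z \<longrightarrow> \<bar>\<sigma> u\<bar> \<le> B"
proof -
  have "compact (\<sigma> ` {-Z..Z})"
    by (rule compact_continuous_image[OF continuous_on_subset[OF assms]]) auto
  then obtain B where "\<forall>z\<in>\<sigma> ` {-Z..Z}. norm z \<le> B"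
    using compact_imp_bounded bounded_iff by metis
  then show ?thesis by (intro exI[of _ B]) (auto simp: abs_le_iff)
qed

lemma idx_w: "i \<in> {1..H} \<Longrightarrow> j \<in> {1..d} \<Longrightarrow> (i-1)*d+j \<in> {1..pdim d H}"
proof -
  assume i: "i \<in> {1..H}" and j: "j \<in> {1..d}"
  have "(i-1)*d + j \<le> (H-1)*d + d" using i j by (intro add_mono mult_right_mono) auto
  also have "\<dots> = H*d" using i by (cases H) auto
  moreover have "H*d \<le> pdim d H" by (simp add: pdim_def mult.commute)
  ultimately show ?thesis using j by auto
qed

lemma idx_b: "i \<in> {1..H} \<Longrightarrow> H*d+i \<in> {1..pdim d H}"
  by (auto simp: pdim_def)

lemma idx_v: "i \<in> {1..H} \<Longrightarrow> H*(d+1)+i \<in> {1..pdim d H}"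
  by (auto simp: pdim_def)

lemma idx_c: "pdim d H \<in> {1..pdim d H}"
  by (auto simp: pdim_def)

definition AA :: "real \<Rightarrow> real \<Rightarrow> real" where "AA a b = \<bar>a\<bar> + \<bar>b\<bar>"

lemma AA_nonneg: "AA a b \<ge> 0" by (simp add: AA_def)

lemma cube_AA: "y \<in> cube d a b \<Longrightarrow> j \<in> {1..d} \<Longrightarrow> \<bar>y j\<bar> \<le> AA a b"
  unfolding AA_def by (rule cube_comp_bound)

definition pbox :: "nat \<Rightarrow> real \<Rightarrow> (nat \<Rightarrow> real) \<Rightarrow> bool" where
  "pbox n K \<theta> \<longleftrightarrow> (\<forall>m\<in>{1..n}. \<bar>\<theta> m\<bar> \<le> K)"

lemma sum_bound_gen:
  fixes F :: "nat \<Rightarrow> real"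
  assumes "\<And>j. j \<in> S \<Longrightarrow> \<bar>F j\<bar> \<le> c"
  shows "\<bar>\<Sum>j\<in>S. F j\<bar> \<le> real (card S) * c"
proof -
  have "\<bar>\<Sum>j\<in>S. F j\<bar> \<le> (\<Sum>j\<in>S. \<bar>F j\<bar>)" by (rule sum_abs)
  also have "\<dots> \<le> (\<Sum>j\<in>S. c)" using assms by (intro sum_mono) auto
  also have "\<dots> = real (card S) * c" by simp
  finally show ?thesis .
qed

definition ZB :: "nat \<Rightarrow> real \<Rightarrow> real \<Rightarrow> real \<Rightarrow> real" where
  "ZB d a b K = K * (1 + real d * AA a b)"

lemma zz_bound:
  assumes "pbox (pdim d H) K \<theta>" "i \<in> {1..H}" "y \<in> cube d a b"
  shows "\<bar>zz d H \<theta> i y\<bar> \<le> ZB d a b K"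
proof -
  have K: "K \<ge> 0" using assms(1) idx_c[of d H] unfolding pbox_def by force
  have "\<bar>\<Sum>j=1..d. wt d \<theta> i j * y j\<bar> \<le> real (card {1..d}) * (K * AA a b)"
  proof (rule sum_bound_gen)
    fix j assume j: "j \<in> {1..d}"
    have "\<bar>wt d \<theta> i j\<bar> \<le> K" using assms(1) idx_w[OF assms(2) j] by (auto simp: pbox_def wt_def)
    moreover have "\<bar>y j\<bar> \<le> AA a b" using cube_AA[OF assms(3) j] .
    ultimately show "\<bar>wt d \<theta> i j * y j\<bar> \<le> K * AA a b"
      by (simp add: abs_mult mult_mono K)
  qed
  moreover have "\<bar>bs d H \<theta> i\<bar> \<le> K" using assms(1) idx_b[OF assms(2)] by (auto simp: pbox_def bs_def)
  ultimately show ?thesis unfolding zz_def ZB_def by (simp add: algebra_simps)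
qed

lemma NN_bound:
  assumes "pbox (pdim d H) K \<theta>" "y \<in> cube d a b"
    and S: "\<And>u. \<bar>u\<bar> \<le> ZB d a b K \<Longrightarrow> \<bar>\<sigma> u\<bar> \<le> S"
  shows "\<bar>NN d H \<sigma> \<theta> y\<bar> \<le> K + real H * (K * S)"
proof -
  have K: "K \<ge> 0" using assms(1) idx_c[of d H] unfolding pbox_def by force
  have "\<bar>\<Sum>i=1..H. vs d H \<theta> i * \<sigma> (zz d H \<theta> i y)\<bar> \<le> real (card {1..H}) * (K * S)"
  proof (rule sum_bound_gen)
    fix i assume i: "i \<in> {1..H}"
    have "\<bar>vs d H \<theta> i\<bar> \<le> K" using assms(1) idx_v[OF i] by (auto simp: pbox_def vs_def)
    moreover have "\<bar>\<sigma> (zz d H \<theta> i y)\<bar> \<le> S" by (rule S[OF zz_bound[OF assms(1) i assms(2)]])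
    ultimately show "\<bar>vs d H \<theta> i * \<sigma> (zz d H \<theta> i y)\<bar> \<le> K * S"
      by (simp add: abs_mult mult_mono K)
  qed
  moreover have "\<bar>cc d H \<theta>\<bar> \<le> K" using assms(1) idx_c[of d H] by (auto simp: pbox_def cc_def)
  ultimately show ?thesis unfolding NN_def by simp
qed

definition DB :: "nat \<Rightarrow> nat \<Rightarrow> real \<Rightarrow> real \<Rightarrow> real \<Rightarrow> real \<Rightarrow> real \<Rightarrow> real" where
  "DB d H a b K S S' = 1 + real H * (S + K * (S' * (1 + real d * AA a b)))"

lemma DN_bound:
  assumes "pbox (pdim d H) K \<theta>" "y \<in> cube d a b"
    and S: "\<And>u. \<bar>u\<bar> \<le> ZB d a b K \<Longrightarrow> \<bar>\<sigma> u\<bar> \<le> S"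
    and S': "\<And>u. \<bar>u\<bar> \<le> ZB d a b K \<Longrightarrow> \<bar>\<sigma>' u\<bar> \<le> S'"
  shows "\<bar>DN d H \<sigma> \<sigma>' \<theta> k y\<bar> \<le> DB d H a b K S S'"
proof -
  have K: "K \<ge> 0" using assms(1) idx_c[of d H] unfolding pbox_def by force
  have "\<bar>\<Sum>i=1..H. (if k = H*(d+1)+i then \<sigma> (zz d H \<theta> i y) else 0)
        + vs d H \<theta> i * \<sigma>' (zz d H \<theta> i y) *
          ((if H*d+i = k then 1 else 0) + (\<Sum>j=1..d. (if (i-1)*d+j = k then 1 else 0) * y j))\<bar>
      \<le> real (card {1..H}) * (S + K * (S' * (1 + real d * AA a b)))"
  proof (rule sum_bound_gen)
    fix i assume i: "i \<in> {1..H}"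
    have z: "\<bar>zz d H \<theta> i y\<bar> \<le> ZB d a b K" by (rule zz_bound[OF assms(1) i assms(2)])
    have S0: "S \<ge> 0" using S[OF z] by linarith
    have S0': "S' \<ge> 0" using S'[OF z] by linarith
    have v: "\<bar>vs d H \<theta> i\<bar> \<le> K" using assms(1) idx_v[OF i] by (auto simp: pbox_def vs_def)
    have e1: "\<bar>if k = H*(d+1)+i then \<sigma> (zz d H \<theta> i y) else 0\<bar> \<le> S"
      using S[OF z] S0 by auto
    have js: "\<bar>\<Sum>j=1..d. (if (i-1)*d+j = k then 1 else 0) * y j\<bar> \<le> real (card {1..d}) * AA a b"
      by (rule sum_bound_gen) (use cube_AA[OF assms(2)] AA_nonneg in auto)
    have e2: "\<bar>(if H*d+i = k then 1 else 0) + (\<Sum>j=1..d. (if (i-1)*d+j = k then 1 else 0) * y j)\<bar>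
         \<le> 1 + real d * AA a b"
      using js by auto
    have "\<bar>vs d H \<theta> i * \<sigma>' (zz d H \<theta> i y) *
          ((if H*d+i = k then 1 else 0) + (\<Sum>j=1..d. (if (i-1)*d+j = k then 1 else 0) * y j))\<bar>
        \<le> K * (S' * (1 + real d * AA a b))"
      unfolding abs_mult mult.assoc
      by (intro mult_mono v S'[OF z] e2 K S0') auto
    with e1 show "\<bar>(if k = H*(d+1)+i then \<sigma> (zz d H \<theta> i y) else 0)
        + vs d H \<theta> i * \<sigma>' (zz d H \<theta> i y) *
          ((if H*d+i = k then 1 else 0) + (\<Sum>j=1..d. (if (i-1)*d+j = k then 1 else 0) * y j))\<bar>
      \<le> S + K * (S' * (1 + real d * AA a b))" by linarith
  qed
  moreover have aux: "\<And>c x r. \<bar>c\<bar> \<le> 1 \<Longrightarrow> \<bar>x\<bar> \<le> r \<Longrightarrow> \<bar>c + x\<bar> \<le> 1 + (r::real)" by linarith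
  ultimately show ?thesis unfolding DN_def DB_def by (intro aux) auto
qed


lemma zz_meas: "(\<lambda>y. zz d H \<theta> i y) \<in> borel_measurable (MC d a b)"
  unfolding zz_def
  by (intro borel_measurable_add borel_measurable_const borel_measurable_sum borel_measurable_times comp_meas)

lemma NN_meas:
  assumes "\<sigma> \<in> borel_measurable borel"
  shows "(\<lambda>y. NN d H \<sigma> \<theta> y) \<in> borel_measurable (MC d a b)"
  unfolding NN_def
  by (intro borel_measurable_add borel_measurable_const borel_measurable_sum borel_measurable_times
      measurable_compose[OF zz_meas assms])

lemma if_meas_const: "F \<in> borel_measurable M \<Longrightarrow> (\<lambda>x. if c then F x else (0::real)) \<in> borel_measurable M"
  by (cases c) auto

lemma DN_meas:
  assumes "\<sigma> \<in> borel_measurable borel" "\<sigma>' \<in> borel_measurable borel"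
  shows "(\<lambda>y. DN d H \<sigma> \<sigma>' \<theta> k y) \<in> borel_measurable (MC d a b)"
  unfolding DN_def
  by (intro borel_measurable_add borel_measurable_const borel_measurable_sum borel_measurable_times
      measurable_compose[OF zz_meas assms(1)] measurable_compose[OF zz_meas assms(2)]
      if_meas_const comp_meas) auto

lemma pbox_sum: "pbox n (\<Sum>m=1..n. \<bar>\<theta> m\<bar>) \<theta>"
  unfolding pbox_def by (auto intro: member_le_sum)

lemma pbox_upd: "k \<in> {1..n} \<Longrightarrow> \<bar>s - \<theta> k\<bar> \<le> 1 \<Longrightarrow> pbox n (1 + (\<Sum>m=1..n. \<bar>\<theta> m\<bar>)) (\<theta>(k:=s))"
  unfolding pbox_def
proof
  fix m assume k: "k \<in> {1..n}" and s: "\<bar>s - \<theta> k\<bar> \<le> 1" and m: "m \<in> {1..n}"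
  have "\<bar>\<theta> k\<bar> \<le> (\<Sum>m=1..n. \<bar>\<theta> m\<bar>)" "\<bar>\<theta> m\<bar> \<le> (\<Sum>m=1..n. \<bar>\<theta> m\<bar>)"
    using k m by (auto intro: member_le_sum)
  then show "\<bar>(\<theta>(k := s)) m\<bar> \<le> 1 + (\<Sum>m = 1..n. \<bar>\<theta> m\<bar>)" using s by auto
qed

lemma risk_eq:
  "smooth_risk d H a b f p \<sigma> \<theta> = (\<integral>y. (f y - NN d H \<sigma> \<theta> y)\<^sup>2 * p y \<partial>MC d a b)"
  unfolding smooth_risk_def set_int_MC NN_def zz_def by (simp add: algebra_simps)

lemma grad_formula:
  assumes f_cont: "continuous_on (cube d a b) f"
    and p_meas: "p \<in> borel_measurable (MC d a b)"
    and p_bdd: "\<And>y. y \<in> cube d a b \<Longrightarrow> \<bar>p y\<bar> \<le> P"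
    and sd: "\<And>x. \<sigma> differentiable (at x)"
    and sc: "continuous_on UNIV (deriv \<sigma>)"
    and k: "k \<in> {1..pdim d H}"
  shows "grad (smooth_risk d H a b f p \<sigma>) \<theta> k
       = (\<integral>y. 2 * (NN d H \<sigma> \<theta> y - f y) * DN d H \<sigma> (deriv \<sigma>) \<theta> k y * p y \<partial>MC d a b)"
proof -
  let ?n = "pdim d H"
  define \<sigma>' where "\<sigma>' = deriv \<sigma>"
  have sder: "\<And>x. (\<sigma> has_real_derivative \<sigma>' x) (at x)"
    unfolding \<sigma>'_def using sd DERIV_deriv_iff_real_differentiable by blast
  have scont: "continuous_on UNIV \<sigma>"
    using sd by (simp add: differentiable_imp_continuous_within continuous_at_imp_continuous_on)
  have sm: "\<sigma> \<in> borel_measurable borel" by (rule borel_measurable_continuous_onI[OF scont])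
  have sm': "\<sigma>' \<in> borel_measurable borel" unfolding \<sigma>'_def by (rule borel_measurable_continuous_onI[OF sc])
  have fm: "f \<in> borel_measurable (MC d a b)" by (rule cont_meas[OF f_cont])
  obtain Fb where Fb: "\<And>y. y \<in> cube d a b \<Longrightarrow> \<bar>f y\<bar> \<le> Fb"
    using cont_bounded_cube[OF f_cont] by blast
  define g where "g s y = (f y - NN d H \<sigma> (\<theta>(k:=s)) y)\<^sup>2 * p y" for s y
  define g' where "g' s y = 2 * (NN d H \<sigma> (\<theta>(k:=s)) y - f y) * DN d H \<sigma> \<sigma>' (\<theta>(k:=s)) k y * p y" for s y
  have gm: "g s \<in> borel_measurable (MC d a b)" for s
    unfolding g_def by (intro borel_measurable_times borel_measurable_power borel_measurable_diff fm NN_meas sm p_meas)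
  have gm': "g' s \<in> borel_measurable (MC d a b)" for s
    unfolding g'_def by (intro borel_measurable_times borel_measurable_const borel_measurable_diff fm NN_meas
        DN_meas sm sm' p_meas)
  have gi: "integrable (MC d a b) (g s)" for s
  proof -
    define K where "K = (\<Sum>m=1..?n. \<bar>(\<theta>(k:=s)) m\<bar>)"
    have pb: "pbox ?n K (\<theta>(k:=s))" unfolding K_def by (rule pbox_sum)
    obtain S where hS: "\<And>u. \<bar>u\<bar> \<le> ZB d a b K \<Longrightarrow> \<bar>\<sigma> u\<bar> \<le> S"
      using cont_bounded_interval[OF scont] by blast
    show ?thesis
    proof (rule bounded_integrable[OF gm])
      fix y assume y: "y \<in> cube d a b"
      have "\<bar>f y - NN d H \<sigma> (\<theta>(k:=s)) y\<bar> \<le> Fb + (K + real H * (K * S))"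
        using Fb[OF y] NN_bound[of d H K "\<theta>(k:=s)" y a b \<sigma> S, OF pb y hS] by linarith
      then have "(f y - NN d H \<sigma> (\<theta>(k:=s)) y)\<^sup>2 \<le> (Fb + (K + real H * (K * S)))\<^sup>2"
        by (metis abs_ge_zero power2_abs power_mono)
      moreover have "\<bar>p y\<bar> \<le> P" by (rule p_bdd[OF y])
      ultimately show "\<bar>g s y\<bar> \<le> (Fb + (K + real H * (K * S)))\<^sup>2 * P"
        unfolding g_def abs_mult by (intro mult_mono) auto
    qed
  qed
  have gd: "((\<lambda>s. g s y) has_real_derivative g' s y) (at s)" for s y
  proof -
    have h1: "((\<lambda>s. f y - NN d H \<sigma> (\<theta>(k:=s)) y) has_real_derivative (0 - DN d H \<sigma> \<sigma>' (\<theta>(k:=s)) k y)) (at s)"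
      by (intro DERIV_diff DERIV_const NN_deriv sder)
    have "((\<lambda>s. g s y) has_real_derivative
        (of_nat 2 * ((0 - DN d H \<sigma> \<sigma>' (\<theta>(k:=s)) k y) * (f y - NN d H \<sigma> (\<theta>(k:=s)) y) ^ (2 - Suc 0))) * p y) (at s)"
      unfolding g_def by (intro DERIV_cmult_right DERIV_power h1)
    then show ?thesis by (rule DERIV_cong) (simp add: g'_def algebra_simps)
  qed
  define K where "K = 1 + (\<Sum>m=1..?n. \<bar>\<theta> m\<bar>)"
  obtain S where hS: "\<And>u. \<bar>u\<bar> \<le> ZB d a b K \<Longrightarrow> \<bar>\<sigma> u\<bar> \<le> S"
    using cont_bounded_interval[OF scont] by blast
  obtain S' where hS': "\<And>u. \<bar>u\<bar> \<le> ZB d a b K \<Longrightarrow> \<bar>\<sigma>' u\<bar> \<le> S'"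
    using cont_bounded_interval[OF sc] unfolding \<sigma>'_def by blast
  have gb: "\<bar>g' s y\<bar> \<le> 2 * (K + real H * (K * S) + Fb) * DB d H a b K S S' * P"
    if y: "y \<in> space (MC d a b)" and s: "\<bar>s - \<theta> k\<bar> \<le> 1" for s y
  proof -
    have y': "y \<in> cube d a b" using y by (simp add: space_MC)
    have pb: "pbox ?n K (\<theta>(k:=s))" unfolding K_def by (rule pbox_upd[of k _ s \<theta>, OF k s])
    have "\<bar>NN d H \<sigma> (\<theta>(k:=s)) y - f y\<bar> \<le> K + real H * (K * S) + Fb"
      using Fb[OF y'] NN_bound[of d H K "\<theta>(k:=s)" y a b \<sigma> S, OF pb y' hS] by linarith
    moreover have "\<bar>DN d H \<sigma> \<sigma>' (\<theta>(k:=s)) k y\<bar> \<le> DB d H a b K S S'"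
      by (rule DN_bound[of d H K "\<theta>(k:=s)" y a b \<sigma> S \<sigma>' S', OF pb y' hS hS'])
    moreover have "\<bar>p y\<bar> \<le> P" by (rule p_bdd[OF y'])
    ultimately show ?thesis unfolding g'_def abs_mult
      by (intro mult_mono) auto
  qed
  have "((\<lambda>s. \<integral>y. g s y \<partial>MC d a b) has_real_derivative (\<integral>y. g' (\<theta> k) y \<partial>MC d a b)) (at (\<theta> k))"
    by (rule deriv_integral[OF finite_MC gm gm' gi gd gb])
  moreover have "(\<lambda>s. smooth_risk d H a b f p \<sigma> (\<theta>(k:=s))) = (\<lambda>s. \<integral>y. g s y \<partial>MC d a b)"
    unfolding risk_eq g_def ..
  ultimately show ?thesis
    unfolding grad_def g'_def \<sigma>'_def by (simp add: DERIV_imp_deriv)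
qed


definition relu :: "real \<Rightarrow> real" where "relu x = max x 0"
definition ind :: "real \<Rightarrow> real" where "ind x = (if x > 0 then 1 else 0)"

lemma relu_meas: "relu \<in> borel_measurable borel"
  unfolding relu_def by measurable

lemma ind_meas: "ind \<in> borel_measurable borel"
proof -
  have e: "ind = (\<lambda>x. indicator {0<..} x)" by (auto simp: ind_def fun_eq_iff split: split_indicator)
  show ?thesis unfolding e by (rule borel_measurable_indicator) simp
qed

lemma mvt_abs_bound:
  fixes g g' :: "real \<Rightarrow> real"
  assumes der: "\<And>s. (g has_real_derivative g' s) (at s)"
    and bnd: "\<And>s. \<bar>s\<bar> \<le> \<bar>u\<bar> \<Longrightarrow> \<bar>g' s\<bar> \<le> C"
  shows "\<bar>g u - g 0\<bar> \<le> C * \<bar>u\<bar>"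
proof (cases "u = 0")
  case True then show ?thesis by simp
next
  case False
  show ?thesis
  proof (cases "u > 0")
    case True
    obtain z where z: "0 < z" "z < u" "g u - g 0 = (u - 0) * g' z"
      using MVT2[of 0 u g g'] True der by auto
    have "\<bar>g' z\<bar> \<le> C" using z by (intro bnd) auto
    then show ?thesis using z True by (simp add: abs_mult mult.commute mult_left_mono)
  next
    case False
    then have un: "u < 0" using \<open>u \<noteq> 0\<close> by auto
    obtain z where z: "u < z" "z < 0" "g 0 - g u = (0 - u) * g' z"
      using MVT2[of u 0 g g'] un der by auto
    have "\<bar>g' z\<bar> \<le> C" using z by (intro bnd) auto
    moreover have "\<bar>g u - g 0\<bar> = \<bar>u\<bar> * \<bar>g' z\<bar>" using z un by (simp add: abs_mult abs_minus_commute)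
    ultimately show ?thesis using mult_right_mono[of "\<bar>g' z\<bar>" C "\<bar>u\<bar>"] by (simp add: mult.commute)
  qed
qed

lemma grad_limit:
  fixes R :: "nat \<Rightarrow> real \<Rightarrow> real"
  assumes f_cont: "continuous_on (cube d a b) f"
    and p_meas: "p \<in> borel_measurable (MC d a b)"
    and p_bdd: "\<And>y. y \<in> cube d a b \<Longrightarrow> \<bar>p y\<bar> \<le> P"
    and R_C1: "\<forall>r\<ge>1. (\<forall>x. R r differentiable (at x)) \<and> continuous_on UNIV (deriv (R r))"
    and R_lim: "\<forall>x. (\<lambda>r. \<bar>R r x - max x 0\<bar> + \<bar>deriv (R r) x - indicator {0<..} x\<bar>) \<longlonglongrightarrow> 0"
    and R_bdd: "\<forall>x. \<exists>C. \<forall>r\<ge>1. \<forall>y\<in>{-\<bar>x\<bar>..\<bar>x\<bar>}. \<bar>deriv (R r) y\<bar> \<le> C"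
    and k: "k \<in> {1..pdim d H}"
  shows "(\<lambda>r. grad (smooth_risk d H a b f p (R r)) \<theta> k) \<longlonglongrightarrow>
     (\<integral>y. 2 * (NN d H relu \<theta> y - f y) * DN d H relu ind \<theta> k y * p y \<partial>MC d a b)"
proof -
  let ?n = "pdim d H"
  have Rl: "(\<lambda>r. R r x) \<longlonglongrightarrow> relu x" for x
  proof -
    have "(\<lambda>r. R r x - max x 0) \<longlonglongrightarrow> 0"
      by (rule Lim_null_comparison[OF _ R_lim[rule_format, of x]]) auto
    then show ?thesis unfolding relu_def by (rule LIM_zero_cancel)
  qed
  have Dl: "(\<lambda>r. deriv (R r) x) \<longlonglongrightarrow> ind x" for x
  proof -
    have "(\<lambda>r. deriv (R r) x - indicator {0<..} x) \<longlonglongrightarrow> 0"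
      by (rule Lim_null_comparison[OF _ R_lim[rule_format, of x]]) auto
    then have "(\<lambda>r. deriv (R r) x) \<longlonglongrightarrow> indicator {0<..} x" by (rule LIM_zero_cancel)
    moreover have "indicator {0<..} x = ind x" by (simp add: ind_def indicator_def)
    ultimately show ?thesis by simp
  qed
  have fm: "f \<in> borel_measurable (MC d a b)" by (rule cont_meas[OF f_cont])
  obtain Fb where Fb: "\<And>y. y \<in> cube d a b \<Longrightarrow> \<bar>f y\<bar> \<le> Fb"
    using cont_bounded_cube[OF f_cont] by blast
  define K where "K = (\<Sum>m=1..?n. \<bar>\<theta> m\<bar>)"
  have pb: "pbox ?n K \<theta>" unfolding K_def by (rule pbox_sum)
  define Z where "Z = ZB d a b K"
  obtain C where C0: "\<forall>r\<ge>1. \<forall>y\<in>{-\<bar>Z\<bar>..\<bar>Z\<bar>}. \<bar>deriv (R r) y\<bar> \<le> C"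
    using R_bdd by blast
  have C: "\<And>r u. r \<ge> 1 \<Longrightarrow> \<bar>u\<bar> \<le> Z \<Longrightarrow> \<bar>deriv (R r) u\<bar> \<le> C"
    using C0 by (auto simp: abs_le_iff)
  obtain B0 where B0: "\<And>r. \<bar>R r 0\<bar> \<le> B0"
  proof -
    have "bounded (range (\<lambda>r. R r 0))" by (rule convergent_imp_bounded[OF Rl])
    then show ?thesis using that by (auto simp: bounded_iff)
  qed
  define S where "S = B0 + C * Z"
  have RS: "\<bar>R r u\<bar> \<le> S" if "r \<ge> 1" "\<bar>u\<bar> \<le> Z" for r u
  proof -
    have der: "\<And>s. (R r has_real_derivative deriv (R r) s) (at s)"
      using R_C1 that(1) DERIV_deriv_iff_real_differentiable by blast
    have "\<bar>R r u - R r 0\<bar> \<le> C * \<bar>u\<bar>"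
      by (rule mvt_abs_bound[OF der]) (use C that in auto)
    moreover have "C \<ge> 0" using C[of r 0] that by (simp add: ZB_def) (smt (verit) AA_nonneg ZB_def Z_def mult_nonneg_nonneg pb pbox_def idx_c of_nat_0_le_iff)
    then have "C * \<bar>u\<bar> \<le> C * Z" using that by (simp add: mult_left_mono)
    ultimately show ?thesis using B0[of r] unfolding S_def by linarith
  qed
  define h where "h r y = 2 * (NN d H (R r) \<theta> y - f y) * DN d H (R r) (deriv (R r)) \<theta> k y * p y" for r y
  have eq: "grad (smooth_risk d H a b f p (R r)) \<theta> k = (\<integral>y. h r y \<partial>MC d a b)" if "r \<ge> 1" for r
    unfolding h_def
    by (rule grad_formula[OF f_cont p_meas p_bdd _ _ k]) (use R_C1 that in auto)
  have "(\<lambda>r. \<integral>y. h (r + 1) y \<partial>MC d a b) \<longlonglongrightarrow>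
     (\<integral>y. 2 * (NN d H relu \<theta> y - f y) * DN d H relu ind \<theta> k y * p y \<partial>MC d a b)"
  proof (rule integral_dominated_convergence[where w="\<lambda>_. 2 * (K + real H * (K * S) + Fb) * DB d H a b K S C * P"])
    show "(\<lambda>y. 2 * (NN d H relu \<theta> y - f y) * DN d H relu ind \<theta> k y * p y) \<in> borel_measurable (MC d a b)"
      by (intro borel_measurable_times borel_measurable_const borel_measurable_diff fm NN_meas
        DN_meas relu_meas ind_meas p_meas)
    show "h (r + 1) \<in> borel_measurable (MC d a b)" for r
    proof -
      have "(\<forall>x. R (r+1) differentiable (at x)) \<and> continuous_on UNIV (deriv (R (r+1)))"
        using R_C1 by auto
      then have c1: "continuous_on UNIV (R (r+1))" "continuous_on UNIV (deriv (R (r+1)))"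
        by (auto simp: differentiable_imp_continuous_within continuous_at_imp_continuous_on)
      show ?thesis unfolding h_def
        by (intro borel_measurable_times borel_measurable_const borel_measurable_diff fm NN_meas
          DN_meas p_meas borel_measurable_continuous_onI c1)
    qed
    show "integrable (MC d a b) (\<lambda>_. 2 * (K + real H * (K * S) + Fb) * DB d H a b K S C * P)"
      using finite_MC by (simp add: finite_measure.integrable_const)
    show "AE y in MC d a b. (\<lambda>r. h (r + 1) y) \<longlonglongrightarrow> 2 * (NN d H relu \<theta> y - f y) * DN d H relu ind \<theta> k y * p y"
    proof (rule AE_I2)
      fix y
      have Rl': "(\<lambda>r. R (r+1) x) \<longlonglongrightarrow> relu x" for x
        using LIMSEQ_ignore_initial_segment[OF Rl[of x], of 1] by simp
      have Dl': "(\<lambda>r. deriv (R (r+1)) x) \<longlonglongrightarrow> ind x" for x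
        using LIMSEQ_ignore_initial_segment[OF Dl[of x], of 1] by simp
      show "(\<lambda>r. h (r + 1) y) \<longlonglongrightarrow> 2 * (NN d H relu \<theta> y - f y) * DN d H relu ind \<theta> k y * p y"
        unfolding h_def NN_def DN_def
        using Rl' by (intro tendsto_intros Rl' Dl') auto
    qed
    show "AE y in MC d a b. norm (h (r + 1) y) \<le> 2 * (K + real H * (K * S) + Fb) * DB d H a b K S C * P" for r
    proof (rule AE_I2)
      fix y assume y: "y \<in> space (MC d a b)"
      have y': "y \<in> cube d a b" using y by (simp add: space_MC)
      have hS: "\<And>u. \<bar>u\<bar> \<le> ZB d a b K \<Longrightarrow> \<bar>R (r+1) u\<bar> \<le> S" using RS unfolding Z_def by auto
      have hC: "\<And>u. \<bar>u\<bar> \<le> ZB d a b K \<Longrightarrow> \<bar>deriv (R (r+1)) u\<bar> \<le> C" using C unfolding Z_def by auto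
      have "\<bar>NN d H (R (r+1)) \<theta> y - f y\<bar> \<le> K + real H * (K * S) + Fb"
        using Fb[OF y'] NN_bound[of d H K \<theta> y a b "R (r+1)" S, OF pb y' hS] by linarith
      moreover have "\<bar>DN d H (R (r+1)) (deriv (R (r+1))) \<theta> k y\<bar> \<le> DB d H a b K S C"
        by (rule DN_bound[of d H K \<theta> y a b "R (r+1)" S "deriv (R (r+1))" C, OF pb y' hS hC])
      moreover have "\<bar>p y\<bar> \<le> P" by (rule p_bdd[OF y'])
      ultimately show "norm (h (r + 1) y) \<le> 2 * (K + real H * (K * S) + Fb) * DB d H a b K S C * P"
        unfolding h_def real_norm_def abs_mult by (intro mult_mono) auto
    qed
  qed
  then have "(\<lambda>r. grad (smooth_risk d H a b f p (R (r + 1))) \<theta> k) \<longlonglongrightarrow>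
     (\<integral>y. 2 * (NN d H relu \<theta> y - f y) * DN d H relu ind \<theta> k y * p y \<partial>MC d a b)"
    using eq by simp
  then show ?thesis by (rule LIMSEQ_offset)
qed


lemma interval_meas:
  fixes w \<beta> \<epsilon> :: real
  assumes "w \<noteq> 0" "\<epsilon> \<ge> 0"
  shows "emeasure lborel {t. 0 < \<beta> + w*t \<and> \<beta> + w*t \<le> \<epsilon>} \<le> ennreal (\<epsilon> / \<bar>w\<bar>)"
proof -
  define l where "l = (if w > 0 then -\<beta>/w else (\<epsilon>-\<beta>)/w)"
  have sub: "{t. 0 < \<beta> + w*t \<and> \<beta> + w*t \<le> \<epsilon>} \<subseteq> {l .. l + \<epsilon>/\<bar>w\<bar>}"
  proof
    fix t assume t: "t \<in> {t. 0 < \<beta> + w*t \<and> \<beta> + w*t \<le> \<epsilon>}"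
    show "t \<in> {l .. l + \<epsilon>/\<bar>w\<bar>}"
    proof (cases "w > 0")
      case True
      then show ?thesis using t unfolding l_def by (auto simp: field_simps)
    next
      case False
      then have "w < 0" using assms by auto
      then show ?thesis using t unfolding l_def by (auto simp: field_simps)
    qed
  qed
  have "emeasure lborel {t. 0 < \<beta> + w*t \<and> \<beta> + w*t \<le> \<epsilon>} \<le> emeasure lborel {l .. l + \<epsilon>/\<bar>w\<bar>}"
    by (rule emeasure_mono[OF sub]) simp
  also have "\<dots> = ennreal (\<epsilon>/\<bar>w\<bar>)" using assms by (simp add: emeasure_lborel_Icc_eq)
  finally show ?thesis .
qed

lemma lin_meas_lebd: "(\<lambda>y. \<beta> + (\<Sum>j=1..d. w j * y j)) \<in> borel_measurable (lebd d)"
  by (intro borel_measurable_add borel_measurable_const borel_measurable_sum borel_measurable_times comp_meas_lebd)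

definition strip :: "nat \<Rightarrow> real \<Rightarrow> real \<Rightarrow> (nat \<Rightarrow> real) \<Rightarrow> real \<Rightarrow> real \<Rightarrow> (nat \<Rightarrow> real) set" where
  "strip d a b w \<beta> \<epsilon> = {y \<in> cube d a b. 0 < \<beta> + (\<Sum>j=1..d. w j * y j) \<and> \<beta> + (\<Sum>j=1..d. w j * y j) \<le> \<epsilon>}"

lemma strip_sets: "strip d a b w \<beta> \<epsilon> \<in> sets (lebd d)"
proof -
  have "strip d a b w \<beta> \<epsilon> = cube d a b \<inter> ((\<lambda>y. \<beta> + (\<Sum>j=1..d. w j * y j)) -` {0<..\<epsilon>} \<inter> space (lebd d))"
    unfolding strip_def using cube_sub by auto
  also have "\<dots> \<in> sets (lebd d)"
    by (intro sets.Int cube_sets measurable_sets[OF lin_meas_lebd]) simp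
  finally show ?thesis .
qed

lemma strip_bound:
  fixes w :: "nat \<Rightarrow> real"
  assumes j: "j \<in> {1..d}" and c: "c > 0" "\<bar>w j\<bar> \<ge> c" and e: "\<epsilon> \<ge> 0" and ab: "a \<le> b"
  shows "emeasure (lebd d) (strip d a b w \<beta> \<epsilon>) \<le> ennreal (\<epsilon> / c * (b - a) ^ (d - 1))"
proof -
  interpret product_sigma_finite "\<lambda>_::nat. lborel::real measure" by standard
  define I where "I = {1..d} - {j}"
  have ins: "insert j I = {1..d}" and jI: "j \<notin> I" and fI: "finite I" using j unfolding I_def by auto
  have cI: "card I = d - 1" using j unfolding I_def by simp
  let ?S = "strip d a b w \<beta> \<epsilon>"
  have Sm: "indicator ?S \<in> borel_measurable (PiM (insert j I) (\<lambda>_. lborel::real measure))"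
    using strip_sets[of d a b w \<beta> \<epsilon>] unfolding ins lebd_def by (rule borel_measurable_indicator)
  have "emeasure (lebd d) ?S = (\<integral>\<^sup>+y. indicator ?S y \<partial>(PiM (insert j I) (\<lambda>_. lborel::real measure)))"
    using strip_sets[of d a b w \<beta> \<epsilon>] unfolding ins lebd_def by simp
  also have "\<dots> = (\<integral>\<^sup>+ x. (\<integral>\<^sup>+ t. indicator ?S (x(j := t)) \<partial>(lborel::real measure)) \<partial>(PiM I (\<lambda>_. lborel::real measure)))"
    by (rule product_nn_integral_insert[OF fI jI Sm])
  also have "\<dots> \<le> (\<integral>\<^sup>+ x. ennreal (\<epsilon> / c) * indicator (PiE I (\<lambda>_. {a..b})) x \<partial>(PiM I (\<lambda>_. lborel::real measure)))"
  proof (rule nn_integral_mono)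
    fix x assume x: "x \<in> space (PiM I (\<lambda>_. lborel::real measure))"
    then have xe: "x \<in> extensional I" by (simp add: space_PiM PiE_def)
    show "(\<integral>\<^sup>+ t. indicator ?S (x(j := t)) \<partial>(lborel::real measure)) \<le> ennreal (\<epsilon> / c) * indicator (PiE I (\<lambda>_. {a..b})) x"
    proof (cases "x \<in> PiE I (\<lambda>_. {a..b})")
      case False
      have "indicator ?S (x(j := (t::real))) = (0::ennreal)" for t
      proof -
        have "x(j:=t) \<notin> cube d a b"
        proof
          assume "x(j:=t) \<in> cube d a b"
          then have "\<forall>j'\<in>I. x j' \<in> {a..b}" unfolding cube_def I_def
            by (auto simp: PiE_def Pi_def split: if_splits)
          then show False using False xe by (auto simp: PiE_def Pi_def)
        qed
        then show ?thesis unfolding strip_def by simp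
      qed
      then show ?thesis by simp
    next
      case True
      define \<beta>' where "\<beta>' = \<beta> + (\<Sum>j'\<in>I. w j' * x j')"
      have wj: "w j \<noteq> 0" using c by auto
      have sumeq: "(\<Sum>j'=1..d. w j' * (x(j:=t)) j') = w j * t + (\<Sum>j'\<in>I. w j' * x j')" for t
      proof -
        have "(\<Sum>j'=1..d. w j' * (x(j:=t)) j') = w j * (x(j:=t)) j + (\<Sum>j'\<in>I. w j' * (x(j:=t)) j')"
          unfolding ins[symmetric] using fI jI by (simp add: sum.insert)
        also have "(\<Sum>j'\<in>I. w j' * (x(j:=t)) j') = (\<Sum>j'\<in>I. w j' * x j')"
          using jI by (intro sum.cong) auto
        finally show ?thesis by simp
      qed
      have "(\<integral>\<^sup>+ t. indicator ?S (x(j := t)) \<partial>(lborel::real measure))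
          \<le> (\<integral>\<^sup>+ t. indicator {t. 0 < \<beta>' + w j * t \<and> \<beta>' + w j * t \<le> \<epsilon>} t \<partial>(lborel::real measure))"
      proof (intro nn_integral_mono)
        fix t :: real
        have "x(j:=t) \<in> ?S \<Longrightarrow> t \<in> {t. 0 < \<beta>' + w j * t \<and> \<beta>' + w j * t \<le> \<epsilon>}"
          unfolding strip_def mem_Collect_eq sumeq \<beta>'_def by (simp add: algebra_simps)
        then show "indicator ?S (x(j := t)) \<le> (indicator {t. 0 < \<beta>' + w j * t \<and> \<beta>' + w j * t \<le> \<epsilon>} t :: ennreal)"
          by (auto split: split_indicator)
      qed
      also have "\<dots> = emeasure lborel {t. 0 < \<beta>' + w j * t \<and> \<beta>' + w j * t \<le> \<epsilon>}"
        by (intro nn_integral_indicator) simp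
      also have "\<dots> \<le> ennreal (\<epsilon> / \<bar>w j\<bar>)" by (rule interval_meas[OF wj e])
      also have "\<dots> \<le> ennreal (\<epsilon> / c)" using c e by (intro ennreal_leI divide_left_mono) auto
      finally show ?thesis using True by simp
    qed
  qed
  also have "\<dots> = ennreal (\<epsilon> / c) * emeasure (PiM I (\<lambda>_. lborel::real measure)) (PiE I (\<lambda>_. {a..b}))"
    by (intro nn_integral_cmult_indicator sets_PiM_I_finite fI) auto
  also have "\<dots> = ennreal (\<epsilon> / c) * (\<Prod>i\<in>I. emeasure lborel {a..b})"
    by (subst emeasure_PiM[OF fI]) auto
  also have "\<dots> = ennreal (\<epsilon> / c * (b - a) ^ (d - 1))"
    using ab c e cI by (simp add: ennreal_power ennreal_mult'[symmetric])
  finally show ?thesis .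
qed


definition nm :: "nat \<Rightarrow> (nat \<Rightarrow> real) \<Rightarrow> (nat \<Rightarrow> real) \<Rightarrow> real" where
  "nm n \<phi> \<psi> = (\<Sum>m=1..n. \<bar>\<phi> m - \<psi> m\<bar>)"

lemma nm_comp: "m \<in> {1..n} \<Longrightarrow> \<bar>\<phi> m - \<psi> m\<bar> \<le> nm n \<phi> \<psi>"
  unfolding nm_def by (rule member_le_sum) auto

lemma nm_nonneg: "nm n \<phi> \<psi> \<ge> 0" unfolding nm_def by (simp add: sum_nonneg)

lemma nm_sym: "nm n \<phi> \<psi> = nm n \<psi> \<phi>" unfolding nm_def by (simp add: abs_minus_commute)

lemma nm_triangle: "nm n \<phi> \<psi> \<le> nm n \<phi> \<rho> + nm n \<rho> \<psi>"
  unfolding nm_def sum.distrib[symmetric] by (intro sum_mono) auto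

definition EB :: "nat \<Rightarrow> real \<Rightarrow> real \<Rightarrow> real" where "EB d a b = 1 + real d * AA a b"

lemma EB_pos: "EB d a b \<ge> 1" unfolding EB_def using AA_nonneg by simp

lemma zz_diff:
  assumes "i \<in> {1..H}" "y \<in> cube d a b"
  shows "\<bar>zz d H \<phi> i y - zz d H \<psi> i y\<bar> \<le> EB d a b * nm (pdim d H) \<phi> \<psi>"
proof -
  let ?e = "nm (pdim d H) \<phi> \<psi>"
  have "zz d H \<phi> i y - zz d H \<psi> i y = (bs d H \<phi> i - bs d H \<psi> i) + (\<Sum>j=1..d. (wt d \<phi> i j - wt d \<psi> i j) * y j)"
    unfolding zz_def by (simp add: algebra_simps sum_subtractf)
  moreover have "\<bar>bs d H \<phi> i - bs d H \<psi> i\<bar> \<le> ?e"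
    unfolding bs_def by (rule nm_comp[OF idx_b[OF assms(1)]])
  moreover have "\<bar>\<Sum>j=1..d. (wt d \<phi> i j - wt d \<psi> i j) * y j\<bar> \<le> real (card {1..d}) * (?e * AA a b)"
  proof (rule sum_bound_gen)
    fix j assume j: "j \<in> {1..d}"
    have "\<bar>wt d \<phi> i j - wt d \<psi> i j\<bar> \<le> ?e" unfolding wt_def by (rule nm_comp[OF idx_w[OF assms(1) j]])
    then show "\<bar>(wt d \<phi> i j - wt d \<psi> i j) * y j\<bar> \<le> ?e * AA a b"
      unfolding abs_mult using cube_AA[OF assms(2) j] by (intro mult_mono) auto
  qed
  ultimately show ?thesis unfolding EB_def by (simp add: algebra_simps)
qed

definition Dset :: "nat \<Rightarrow> nat \<Rightarrow> real \<Rightarrow> real \<Rightarrow> (nat \<Rightarrow> real) \<Rightarrow> (nat \<Rightarrow> real) \<Rightarrow> nat \<Rightarrow> (nat \<Rightarrow> real) set" where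
  "Dset d H a b \<phi> \<psi> i = {y \<in> cube d a b. (zz d H \<phi> i y > 0) \<noteq> (zz d H \<psi> i y > 0)}"

lemma zz_meas_lebd: "(\<lambda>y. zz d H \<theta> i y) \<in> borel_measurable (lebd d)"
  unfolding zz_def
  by (intro borel_measurable_add borel_measurable_const borel_measurable_sum borel_measurable_times comp_meas_lebd)

lemma Dset_sets: "Dset d H a b \<phi> \<psi> i \<in> sets (lebd d)"
proof -
  have m1: "{y \<in> space (lebd d). zz d H \<phi> i y > 0} \<in> sets (lebd d)"
    using zz_meas_lebd by measurable
  have m2: "{y \<in> space (lebd d). zz d H \<psi> i y > 0} \<in> sets (lebd d)"
    using zz_meas_lebd by measurable
  have "Dset d H a b \<phi> \<psi> i = cube d a b \<inter> ((space (lebd d) - {y \<in> space (lebd d). zz d H \<phi> i y > 0}) \<inter> {y \<in> space (lebd d). zz d H \<psi> i y > 0}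
     \<union> {y \<in> space (lebd d). zz d H \<phi> i y > 0} \<inter> (space (lebd d) - {y \<in> space (lebd d). zz d H \<psi> i y > 0}))"
    unfolding Dset_def using cube_sub by auto
  also have "\<dots> \<in> sets (lebd d)" using m1 m2 cube_sets by auto
  finally show ?thesis .
qed

lemma Dset_strip:
  assumes i: "i \<in> {1..H}"
  shows "Dset d H a b \<phi> \<psi> i \<subseteq>
    strip d a b (wt d \<phi> i) (bs d H \<phi> i) (EB d a b * nm (pdim d H) \<phi> \<psi>) \<union>
    strip d a b (wt d \<psi> i) (bs d H \<psi> i) (EB d a b * nm (pdim d H) \<phi> \<psi>)"
proof
  fix y assume y: "y \<in> Dset d H a b \<phi> \<psi> i"
  then have yc: "y \<in> cube d a b" unfolding Dset_def by auto
  have df: "\<bar>zz d H \<phi> i y - zz d H \<psi> i y\<bar> \<le> EB d a b * nm (pdim d H) \<phi> \<psi>" by (rule zz_diff[OF i yc])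
  show "y \<in> strip d a b (wt d \<phi> i) (bs d H \<phi> i) (EB d a b * nm (pdim d H) \<phi> \<psi>) \<union>
    strip d a b (wt d \<psi> i) (bs d H \<psi> i) (EB d a b * nm (pdim d H) \<phi> \<psi>)"
    using y df yc unfolding Dset_def strip_def zz_def by auto
qed


lemma degen_zz: "i \<in> degen d H \<phi> \<Longrightarrow> zz d H \<phi> i y = 0"
proof -
  assume "i \<in> degen d H \<phi>"
  then have h: "\<bar>bs d H \<phi> i\<bar> + (\<Sum>j=1..d. \<bar>wt d \<phi> i j\<bar>) = 0" unfolding degen_def by auto
  have s0: "(\<Sum>j=1..d. \<bar>wt d \<phi> i j\<bar>) \<ge> 0" by (simp add: sum_nonneg)
  have "\<bar>bs d H \<phi> i\<bar> = 0 \<and> (\<Sum>j=1..d. \<bar>wt d \<phi> i j\<bar>) = 0"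
    using h s0 by (smt (verit) abs_ge_zero)
  then have b0: "bs d H \<phi> i = 0" and s: "(\<Sum>j=1..d. \<bar>wt d \<phi> i j\<bar>) = 0" by auto
  then have "\<forall>j\<in>{1..d}. \<bar>wt d \<phi> i j\<bar> = 0" by (subst sum_nonneg_eq_0_iff[symmetric]) auto
  then show ?thesis unfolding zz_def using b0 by simp
qed

lemma degen_Dset: "i \<in> degen d H \<phi> \<Longrightarrow> i \<in> degen d H \<psi> \<Longrightarrow> Dset d H a b \<phi> \<psi> i = {}"
  unfolding Dset_def using degen_zz by auto

lemma nondegen_Dset:
  assumes i: "i \<in> {1..H}" and nd: "i \<notin> degen d H \<theta>0" and ab: "a < b"
  shows "\<exists>\<delta>>0. \<exists>C\<ge>0. \<forall>\<phi> \<psi>. nm (pdim d H) \<theta>0 \<phi> \<le> \<delta> \<longrightarrow> nm (pdim d H) \<theta>0 \<psi> \<le> \<delta> \<longrightarrow>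
     emeasure (lebd d) (Dset d H a b \<phi> \<psi> i) \<le> ennreal (C * nm (pdim d H) \<phi> \<psi>)"
proof (cases "\<exists>j\<in>{1..d}. wt d \<theta>0 i j \<noteq> 0")
  case True
  then obtain j where j: "j \<in> {1..d}" "wt d \<theta>0 i j \<noteq> 0" by blast
  define c where "c = \<bar>wt d \<theta>0 i j\<bar> / 2"
  have c0: "c > 0" unfolding c_def using j by auto
  define C where "C = 2 * (EB d a b / c * (b - a) ^ (d - 1))"
  have C0: "C \<ge> 0" unfolding C_def using c0 ab EB_pos[of d a b] by auto
  show ?thesis
  proof (rule exI[of _ c], intro conjI c0, rule exI[of _ C], intro conjI C0 allI impI)
    fix \<phi> \<psi> assume h\<phi>: "nm (pdim d H) \<theta>0 \<phi> \<le> c" and h\<psi>: "nm (pdim d H) \<theta>0 \<psi> \<le> c"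
    let ?e = "EB d a b * nm (pdim d H) \<phi> \<psi>"
    have e0: "?e \<ge> 0" using EB_pos[of d a b] nm_nonneg[of "pdim d H" \<phi> \<psi>] by simp
    have w\<phi>: "\<bar>wt d \<phi> i j\<bar> \<ge> c"
    proof -
      have "\<bar>\<theta>0 ((i-1)*d+j) - \<phi> ((i-1)*d+j)\<bar> \<le> c" using nm_comp[OF idx_w[OF i j(1)]] h\<phi> by (meson order_trans)
      then show ?thesis unfolding c_def wt_def by linarith
    qed
    have w\<psi>: "\<bar>wt d \<psi> i j\<bar> \<ge> c"
    proof -
      have "\<bar>\<theta>0 ((i-1)*d+j) - \<psi> ((i-1)*d+j)\<bar> \<le> c" using nm_comp[OF idx_w[OF i j(1)]] h\<psi> by (meson order_trans)
      then show ?thesis unfolding c_def wt_def by linarith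
    qed
    have "emeasure (lebd d) (Dset d H a b \<phi> \<psi> i) \<le>
      emeasure (lebd d) (strip d a b (wt d \<phi> i) (bs d H \<phi> i) ?e \<union> strip d a b (wt d \<psi> i) (bs d H \<psi> i) ?e)"
      by (rule emeasure_mono[OF Dset_strip[OF i]]) (intro sets.Un strip_sets)
    also have "\<dots> \<le> emeasure (lebd d) (strip d a b (wt d \<phi> i) (bs d H \<phi> i) ?e) + emeasure (lebd d) (strip d a b (wt d \<psi> i) (bs d H \<psi> i) ?e)"
      by (rule emeasure_subadditive) (intro strip_sets)+
    also have "\<dots> \<le> ennreal (?e / c * (b - a) ^ (d - 1)) + ennreal (?e / c * (b - a) ^ (d - 1))"
      using ab by (intro add_mono strip_bound[OF j(1) c0] w\<phi> w\<psi> e0) auto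
    also have "\<dots> = ennreal (C * nm (pdim d H) \<phi> \<psi>)"
      unfolding C_def using e0 c0 ab by (simp add: ennreal_plus[symmetric] del: ennreal_plus) (simp add: field_simps)
    finally show "emeasure (lebd d) (Dset d H a b \<phi> \<psi> i) \<le> ennreal (C * nm (pdim d H) \<phi> \<psi>)" .
  qed
next
  case False
  then have w0: "\<And>j. j \<in> {1..d} \<Longrightarrow> wt d \<theta>0 i j = 0" by auto
  then have "bs d H \<theta>0 i \<noteq> 0" using nd i unfolding degen_def by auto
  define b0 where "b0 = bs d H \<theta>0 i"
  have b00: "b0 \<noteq> 0" unfolding b0_def by fact
  have z0: "zz d H \<theta>0 i y = b0" for y unfolding zz_def b0_def using w0 by simp
  define \<delta> where "\<delta> = \<bar>b0\<bar> / (2 * EB d a b)"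
  have \<delta>0: "\<delta> > 0" unfolding \<delta>_def using b00 EB_pos[of d a b] by auto
  show ?thesis
  proof (rule exI[of _ \<delta>], intro conjI \<delta>0, rule exI[of _ 0], intro conjI order_refl allI impI)
    fix \<phi> \<psi> assume h\<phi>: "nm (pdim d H) \<theta>0 \<phi> \<le> \<delta>" and h\<psi>: "nm (pdim d H) \<theta>0 \<psi> \<le> \<delta>"
    have sg: "(zz d H \<rho> i y > 0) = (b0 > 0)" if "y \<in> cube d a b" "nm (pdim d H) \<theta>0 \<rho> \<le> \<delta>" for y \<rho>
    proof -
      have "\<bar>zz d H \<theta>0 i y - zz d H \<rho> i y\<bar> \<le> EB d a b * nm (pdim d H) \<theta>0 \<rho>"
        by (rule zz_diff[OF i that(1)])
      also have "\<dots> \<le> EB d a b * \<delta>" using that(2) EB_pos[of d a b] by (intro mult_left_mono) auto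
      also have "\<dots> = \<bar>b0\<bar> / 2" unfolding \<delta>_def using EB_pos[of d a b] by simp
      finally have "\<bar>b0 - zz d H \<rho> i y\<bar> \<le> \<bar>b0\<bar> / 2" unfolding z0 .
      then show ?thesis using b00 by (auto simp: abs_if split: if_split_asm)
    qed
    have "Dset d H a b \<phi> \<psi> i = {}" unfolding Dset_def using sg h\<phi> h\<psi> by auto
    then show "emeasure (lebd d) (Dset d H a b \<phi> \<psi> i) \<le> ennreal (0 * nm (pdim d H) \<phi> \<psi>)" by simp
  qed
qed


lemma all_Dset:
  assumes ab: "a < b"
  shows "\<exists>\<delta>>0. \<exists>C\<ge>0. \<forall>\<phi> \<psi>. nm (pdim d H) \<theta>0 \<phi> \<le> \<delta> \<longrightarrow> nm (pdim d H) \<theta>0 \<psi> \<le> \<delta> \<longrightarrow>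
     (\<forall>i\<in>degen d H \<theta>0. i \<in> degen d H \<phi> \<and> i \<in> degen d H \<psi>) \<longrightarrow>
     (\<forall>i\<in>{1..H}. emeasure (lebd d) (Dset d H a b \<phi> \<psi> i) \<le> ennreal (C * nm (pdim d H) \<phi> \<psi>))"
proof -
  define N where "N = {1..H} - degen d H \<theta>0"
  have fN: "finite N" unfolding N_def by simp
  have "\<forall>i\<in>N. \<exists>\<delta>>0. \<exists>C\<ge>0. \<forall>\<phi> \<psi>. nm (pdim d H) \<theta>0 \<phi> \<le> \<delta> \<longrightarrow> nm (pdim d H) \<theta>0 \<psi> \<le> \<delta> \<longrightarrow>
     emeasure (lebd d) (Dset d H a b \<phi> \<psi> i) \<le> ennreal (C * nm (pdim d H) \<phi> \<psi>)"
    using nondegen_Dset[OF _ _ ab] unfolding N_def by blast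
  then obtain \<delta>f Cf where hf: "\<And>i. i \<in> N \<Longrightarrow> \<delta>f i > 0 \<and> Cf i \<ge> 0 \<and> (\<forall>\<phi> \<psi>. nm (pdim d H) \<theta>0 \<phi> \<le> \<delta>f i \<longrightarrow> nm (pdim d H) \<theta>0 \<psi> \<le> \<delta>f i \<longrightarrow>
     emeasure (lebd d) (Dset d H a b \<phi> \<psi> i) \<le> ennreal (Cf i * nm (pdim d H) \<phi> \<psi>))"
    by metis
  define \<delta> where "\<delta> = Min (insert 1 (\<delta>f ` N))"
  define C where "C = (\<Sum>i\<in>N. Cf i)"
  have \<delta>0: "\<delta> > 0" unfolding \<delta>_def using fN hf by (subst Min_gr_iff) auto
  have \<delta>le: "\<delta> \<le> \<delta>f i" if "i \<in> N" for i unfolding \<delta>_def using fN that by (intro Min_le) auto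
  have C0: "C \<ge> 0" unfolding C_def using hf by (intro sum_nonneg) auto
  have Cle: "Cf i \<le> C" if "i \<in> N" for i unfolding C_def using fN that hf by (intro member_le_sum) auto
  show ?thesis
  proof (rule exI[of _ \<delta>], intro conjI \<delta>0, rule exI[of _ C], intro conjI C0 allI impI ballI)
    fix \<phi> \<psi> i
    assume h\<phi>: "nm (pdim d H) \<theta>0 \<phi> \<le> \<delta>" and h\<psi>: "nm (pdim d H) \<theta>0 \<psi> \<le> \<delta>"
      and dg: "\<forall>i\<in>degen d H \<theta>0. i \<in> degen d H \<phi> \<and> i \<in> degen d H \<psi>" and i: "i \<in> {1..H}"
    show "emeasure (lebd d) (Dset d H a b \<phi> \<psi> i) \<le> ennreal (C * nm (pdim d H) \<phi> \<psi>)"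
    proof (cases "i \<in> degen d H \<theta>0")
      case True
      then show ?thesis using dg degen_Dset by simp
    next
      case False
      then have iN: "i \<in> N" unfolding N_def using i by auto
      have "emeasure (lebd d) (Dset d H a b \<phi> \<psi> i) \<le> ennreal (Cf i * nm (pdim d H) \<phi> \<psi>)"
        using hf[OF iN] h\<phi> h\<psi> \<delta>le[OF iN] by auto
      also have "\<dots> \<le> ennreal (C * nm (pdim d H) \<phi> \<psi>)"
        by (intro ennreal_leI mult_right_mono Cle iN nm_nonneg)
      finally show ?thesis .
    qed
  qed
qed

lemma relu_lip: "\<bar>relu u - relu v\<bar> \<le> \<bar>u - v\<bar>" unfolding relu_def by auto
lemma relu_abs: "\<bar>relu u\<bar> \<le> \<bar>u\<bar>" unfolding relu_def by auto
lemma ind_abs: "\<bar>ind u\<bar> \<le> 1" unfolding ind_def by auto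

lemma ind_Dset:
  assumes "y \<in> cube d a b"
  shows "\<bar>ind (zz d H \<phi> i y) - ind (zz d H \<psi> i y)\<bar> = indicator (Dset d H a b \<phi> \<psi> i) y"
  using assms unfolding ind_def Dset_def by (auto split: split_indicator)

definition CI :: "nat \<Rightarrow> nat \<Rightarrow> nat \<Rightarrow> nat \<Rightarrow> (nat \<Rightarrow> real) \<Rightarrow> real" where
  "CI d H k i y = (if H*d+i = k then 1 else 0) + (\<Sum>j=1..d. (if (i-1)*d+j = k then 1 else 0) * y j)"

lemma CI_bound: "y \<in> cube d a b \<Longrightarrow> \<bar>CI d H k i y\<bar> \<le> EB d a b"
proof -
  assume y: "y \<in> cube d a b"
  have js: "\<bar>\<Sum>j=1..d. (if (i-1)*d+j = k then 1 else 0) * y j\<bar> \<le> real (card {1..d}) * AA a b"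
    by (rule sum_bound_gen) (use cube_AA[OF y] AA_nonneg in auto)
  then show ?thesis unfolding CI_def EB_def by auto
qed

lemma DN_CI: "DN d H \<sigma> \<sigma>' \<theta> k y = (if k = pdim d H then 1 else 0) +
     (\<Sum>i=1..H. (if k = H*(d+1)+i then \<sigma> (zz d H \<theta> i y) else 0)
        + vs d H \<theta> i * \<sigma>' (zz d H \<theta> i y) * CI d H k i y)"
  unfolding DN_def CI_def ..

lemma NN_lip:
  assumes pb: "pbox (pdim d H) K \<phi>" "pbox (pdim d H) K \<psi>" and y: "y \<in> cube d a b"
  shows "\<bar>NN d H relu \<phi> y - NN d H relu \<psi> y\<bar> \<le> (1 + real H * (ZB d a b K + K * EB d a b)) * nm (pdim d H) \<phi> \<psi>"
proof -
  let ?e = "nm (pdim d H) \<phi> \<psi>"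
  have K: "K \<ge> 0" using pb(1) idx_c[of d H] unfolding pbox_def by force
  have e0: "?e \<ge> 0" by (rule nm_nonneg)
  have "NN d H relu \<phi> y - NN d H relu \<psi> y = (cc d H \<phi> - cc d H \<psi>) +
     (\<Sum>i=1..H. vs d H \<phi> i * relu (zz d H \<phi> i y) - vs d H \<psi> i * relu (zz d H \<psi> i y))"
    unfolding NN_def by (simp add: sum_subtractf)
  moreover have "\<bar>cc d H \<phi> - cc d H \<psi>\<bar> \<le> ?e" unfolding cc_def by (rule nm_comp[OF idx_c])
  moreover have "\<bar>\<Sum>i=1..H. vs d H \<phi> i * relu (zz d H \<phi> i y) - vs d H \<psi> i * relu (zz d H \<psi> i y)\<bar>
      \<le> real (card {1..H}) * (?e * ZB d a b K + K * (EB d a b * ?e))"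
  proof (rule sum_bound_gen)
    fix i assume i: "i \<in> {1..H}"
    have v: "\<bar>vs d H \<phi> i - vs d H \<psi> i\<bar> \<le> ?e" unfolding vs_def by (rule nm_comp[OF idx_v[OF i]])
    have v\<psi>: "\<bar>vs d H \<psi> i\<bar> \<le> K" using pb(2) idx_v[OF i] by (auto simp: pbox_def vs_def)
    have r1: "\<bar>relu (zz d H \<phi> i y)\<bar> \<le> ZB d a b K"
      using relu_abs zz_bound[OF pb(1) i y] order_trans by blast
    have r2: "\<bar>relu (zz d H \<phi> i y) - relu (zz d H \<psi> i y)\<bar> \<le> EB d a b * ?e"
      using relu_lip zz_diff[OF i y] order_trans by blast
    have "vs d H \<phi> i * relu (zz d H \<phi> i y) - vs d H \<psi> i * relu (zz d H \<psi> i y)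
       = (vs d H \<phi> i - vs d H \<psi> i) * relu (zz d H \<phi> i y) + vs d H \<psi> i * (relu (zz d H \<phi> i y) - relu (zz d H \<psi> i y))"
      by (simp add: algebra_simps)
    moreover have "\<bar>(vs d H \<phi> i - vs d H \<psi> i) * relu (zz d H \<phi> i y)\<bar> \<le> ?e * ZB d a b K"
      unfolding abs_mult by (intro mult_mono v r1 e0) auto
    moreover have "\<bar>vs d H \<psi> i * (relu (zz d H \<phi> i y) - relu (zz d H \<psi> i y))\<bar> \<le> K * (EB d a b * ?e)"
      unfolding abs_mult by (intro mult_mono v\<psi> r2 K) auto
    ultimately show "\<bar>vs d H \<phi> i * relu (zz d H \<phi> i y) - vs d H \<psi> i * relu (zz d H \<psi> i y)\<bar>
        \<le> ?e * ZB d a b K + K * (EB d a b * ?e)" by (smt (verit))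
  qed
  ultimately show ?thesis by (simp add: algebra_simps)
qed

lemma DN_lip:
  assumes pb: "pbox (pdim d H) K \<phi>" "pbox (pdim d H) K \<psi>" and y: "y \<in> cube d a b"
  shows "\<bar>DN d H relu ind \<phi> k y - DN d H relu ind \<psi> k y\<bar> \<le>
     (2 * real H * EB d a b) * nm (pdim d H) \<phi> \<psi> + K * EB d a b * (\<Sum>i=1..H. indicator (Dset d H a b \<phi> \<psi> i) y)"
proof -
  let ?e = "nm (pdim d H) \<phi> \<psi>"
  let ?E = "EB d a b"
  have K: "K \<ge> 0" using pb(1) idx_c[of d H] unfolding pbox_def by force
  have e0: "?e \<ge> 0" by (rule nm_nonneg)
  have E0: "?E \<ge> 0" using EB_pos[of d a b] by simp
  define T where "T \<theta> i = (if k = H*(d+1)+i then relu (zz d H \<theta> i y) else 0)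
        + vs d H \<theta> i * ind (zz d H \<theta> i y) * CI d H k i y" for \<theta> i
  have "DN d H relu ind \<phi> k y - DN d H relu ind \<psi> k y = (\<Sum>i=1..H. T \<phi> i - T \<psi> i)"
    unfolding DN_CI T_def by (simp add: sum_subtractf)
  also have "\<bar>\<dots>\<bar> \<le> (\<Sum>i=1..H. \<bar>T \<phi> i - T \<psi> i\<bar>)" by (rule sum_abs)
  also have "\<dots> \<le> (\<Sum>i=1..H. 2 * ?E * ?e + K * ?E * indicator (Dset d H a b \<phi> \<psi> i) y)"
  proof (rule sum_mono)
    fix i assume i: "i \<in> {1..H}"
    have v: "\<bar>vs d H \<phi> i - vs d H \<psi> i\<bar> \<le> ?e" unfolding vs_def by (rule nm_comp[OF idx_v[OF i]])
    have v\<psi>: "\<bar>vs d H \<psi> i\<bar> \<le> K" using pb(2) idx_v[OF i] by (auto simp: pbox_def vs_def)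
    have r2: "\<bar>relu (zz d H \<phi> i y) - relu (zz d H \<psi> i y)\<bar> \<le> ?E * ?e"
      using relu_lip zz_diff[OF i y] order_trans by blast
    have c: "\<bar>CI d H k i y\<bar> \<le> ?E" by (rule CI_bound[OF y])
    have id: "\<bar>ind (zz d H \<phi> i y) - ind (zz d H \<psi> i y)\<bar> = indicator (Dset d H a b \<phi> \<psi> i) y"
      by (rule ind_Dset[OF y])
    have t1: "\<bar>(if k = H*(d+1)+i then relu (zz d H \<phi> i y) else 0) - (if k = H*(d+1)+i then relu (zz d H \<psi> i y) else 0)\<bar>
        \<le> ?E * ?e" using r2 E0 e0 by auto
    have "vs d H \<phi> i * ind (zz d H \<phi> i y) - vs d H \<psi> i * ind (zz d H \<psi> i y)
       = (vs d H \<phi> i - vs d H \<psi> i) * ind (zz d H \<phi> i y) + vs d H \<psi> i * (ind (zz d H \<phi> i y) - ind (zz d H \<psi> i y))"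
      by (simp add: algebra_simps)
    moreover have "\<bar>(vs d H \<phi> i - vs d H \<psi> i) * ind (zz d H \<phi> i y)\<bar> \<le> ?e"
      unfolding abs_mult using mult_mono[OF v ind_abs] e0 by simp
    moreover have "\<bar>vs d H \<psi> i * (ind (zz d H \<phi> i y) - ind (zz d H \<psi> i y))\<bar> \<le> K * indicator (Dset d H a b \<phi> \<psi> i) y"
      unfolding abs_mult id by (intro mult_right_mono v\<psi>) auto
    ultimately have t2: "\<bar>vs d H \<phi> i * ind (zz d H \<phi> i y) - vs d H \<psi> i * ind (zz d H \<psi> i y)\<bar>
       \<le> ?e + K * indicator (Dset d H a b \<phi> \<psi> i) y" by (smt (verit))
    have "\<bar>(vs d H \<phi> i * ind (zz d H \<phi> i y) - vs d H \<psi> i * ind (zz d H \<psi> i y)) * CI d H k i y\<bar>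
       \<le> (?e + K * indicator (Dset d H a b \<phi> \<psi> i) y) * ?E"
      unfolding abs_mult by (intro mult_mono t2 c) (use e0 K in auto)
    moreover have "T \<phi> i - T \<psi> i = ((if k = H*(d+1)+i then relu (zz d H \<phi> i y) else 0) - (if k = H*(d+1)+i then relu (zz d H \<psi> i y) else 0))
        + (vs d H \<phi> i * ind (zz d H \<phi> i y) - vs d H \<psi> i * ind (zz d H \<psi> i y)) * CI d H k i y"
      unfolding T_def by (simp add: algebra_simps)
    ultimately show "\<bar>T \<phi> i - T \<psi> i\<bar> \<le> 2 * ?E * ?e + K * ?E * indicator (Dset d H a b \<phi> \<psi> i) y"
      using t1 by (simp add: algebra_simps)
  qed
  also have "\<dots> = (2 * real H * ?E) * ?e + K * ?E * (\<Sum>i=1..H. indicator (Dset d H a b \<phi> \<psi> i) y)"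
    by (simp add: sum.distrib sum_distrib_left)
  finally show ?thesis .
qed


definition GS :: "nat \<Rightarrow> nat \<Rightarrow> real \<Rightarrow> real \<Rightarrow> ((nat \<Rightarrow> real) \<Rightarrow> real) \<Rightarrow> ((nat \<Rightarrow> real) \<Rightarrow> real)
   \<Rightarrow> (nat \<Rightarrow> real) \<Rightarrow> nat \<Rightarrow> real" where
  "GS d H a b f p \<phi> k = (\<integral>y. 2 * (NN d H relu \<phi> y - f y) * DN d H relu ind \<phi> k y * p y \<partial>MC d a b)"

lemma abs_integral_le:
  fixes g B :: "_ \<Rightarrow> real"
  assumes "integrable M g" "integrable M B" "\<And>x. x \<in> space M \<Longrightarrow> \<bar>g x\<bar> \<le> B x"
  shows "\<bar>integral\<^sup>L M g\<bar> \<le> integral\<^sup>L M B"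
proof -
  have "integral\<^sup>L M g \<le> integral\<^sup>L M B"
    by (rule integral_mono[OF assms(1,2)]) (use assms(3) in \<open>force simp: abs_le_iff\<close>)
  moreover have "integral\<^sup>L M (\<lambda>x. - g x) \<le> integral\<^sup>L M B"
    by (rule integral_mono[OF _ assms(2)]) (use assms in \<open>force simp: abs_le_iff\<close>)+
  ultimately show ?thesis by simp
qed

lemma Dset_sets_MC: "Dset d H a b \<phi> \<psi> i \<in> sets (MC d a b)"
  using Dset_sets[of d H a b \<phi> \<psi> i] cube_sets[of d a b] cube_sub[of d a b]
  by (subst sets_restrict_space_iff) (auto simp: Dset_def Int_absorb2)

lemma measure_Dset:
  assumes "emeasure (lebd d) (Dset d H a b \<phi> \<psi> i) \<le> ennreal X" "X \<ge> 0"
  shows "measure (MC d a b) (Dset d H a b \<phi> \<psi> i) \<le> X"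
proof -
  have "measure (MC d a b) (Dset d H a b \<phi> \<psi> i) = measure (lebd d) (Dset d H a b \<phi> \<psi> i)"
    using cube_sets[of d a b] cube_sub[of d a b]
    by (intro measure_restrict_space) (auto simp: Dset_def Int_absorb2)
  also have "\<dots> \<le> X" unfolding measure_def using assms by (intro enn2real_leI)
  finally show ?thesis .
qed

lemma GS_integrable:
  assumes f_cont: "continuous_on (cube d a b) f"
    and p_meas: "p \<in> borel_measurable (MC d a b)"
    and p_bdd: "\<And>y. y \<in> cube d a b \<Longrightarrow> \<bar>p y\<bar> \<le> P"
    and Fb: "\<And>y. y \<in> cube d a b \<Longrightarrow> \<bar>f y\<bar> \<le> Fb"
    and pb: "pbox (pdim d H) K \<phi>"
  shows "integrable (MC d a b) (\<lambda>y. 2 * (NN d H relu \<phi> y - f y) * DN d H relu ind \<phi> k y * p y)"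
proof (rule bounded_integrable)
  show "(\<lambda>y. 2 * (NN d H relu \<phi> y - f y) * DN d H relu ind \<phi> k y * p y) \<in> borel_measurable (MC d a b)"
    by (intro borel_measurable_times borel_measurable_const borel_measurable_diff cont_meas[OF f_cont] NN_meas
        DN_meas relu_meas ind_meas p_meas)
  fix y assume y: "y \<in> cube d a b"
  have hS: "\<And>u. \<bar>u\<bar> \<le> ZB d a b K \<Longrightarrow> \<bar>relu u\<bar> \<le> ZB d a b K" using relu_abs order_trans by blast
  have hI: "\<And>u. \<bar>u\<bar> \<le> ZB d a b K \<Longrightarrow> \<bar>ind u\<bar> \<le> 1" using ind_abs by blast
  have "\<bar>NN d H relu \<phi> y - f y\<bar> \<le> K + real H * (K * ZB d a b K) + Fb"
    using Fb[OF y] NN_bound[of d H K \<phi> y a b relu "ZB d a b K", OF pb y hS] by linarith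
  moreover have "\<bar>DN d H relu ind \<phi> k y\<bar> \<le> DB d H a b K (ZB d a b K) 1"
    by (rule DN_bound[of d H K \<phi> y a b relu "ZB d a b K" ind 1, OF pb y hS hI])
  moreover have "\<bar>p y\<bar> \<le> P" by (rule p_bdd[OF y])
  ultimately show "\<bar>2 * (NN d H relu \<phi> y - f y) * DN d H relu ind \<phi> k y * p y\<bar>
      \<le> 2 * (K + real H * (K * ZB d a b K) + Fb) * DB d H a b K (ZB d a b K) 1 * P"
    unfolding abs_mult by (intro mult_mono) auto
qed

lemma cube_pt: "a \<le> b \<Longrightarrow> (\<lambda>i. if i \<in> {1..d} then a else undefined) \<in> cube d a b"
  unfolding cube_def by (auto simp: PiE_def extensional_def)

lemma GS_lip:
  assumes ab: "a \<le> b"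
    and f_cont: "continuous_on (cube d a b) f"
    and p_meas: "p \<in> borel_measurable (MC d a b)"
    and p_bdd: "\<And>y. y \<in> cube d a b \<Longrightarrow> \<bar>p y\<bar> \<le> P"
    and Fb: "\<And>y. y \<in> cube d a b \<Longrightarrow> \<bar>f y\<bar> \<le> Fb"
    and pb: "pbox (pdim d H) K \<phi>" "pbox (pdim d H) K \<psi>"
    and Dm: "\<forall>i\<in>{1..H}. emeasure (lebd d) (Dset d H a b \<phi> \<psi> i) \<le> ennreal (C * nm (pdim d H) \<phi> \<psi>)"
    and C0: "C \<ge> 0"
  shows "\<bar>GS d H a b f p \<phi> k - GS d H a b f p \<psi> k\<bar> \<le>
    (2 * P * (((1 + real H * (ZB d a b K + K * EB d a b)) * DB d H a b K (ZB d a b K) 1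
              + (K + real H * (K * ZB d a b K) + Fb) * (2 * real H * EB d a b)) * measure (lebd d) (cube d a b)
         + (K + real H * (K * ZB d a b K) + Fb) * (K * EB d a b) * (real H * C))) * nm (pdim d H) \<phi> \<psi>"
proof -
  let ?e = "nm (pdim d H) \<phi> \<psi>"
  let ?Z = "ZB d a b K"
  let ?LN = "1 + real H * (?Z + K * EB d a b)"
  let ?DB = "DB d H a b K ?Z 1"
  let ?NB = "K + real H * (K * ?Z) + Fb"
  let ?LD = "2 * real H * EB d a b"
  let ?M0 = "?NB * (K * EB d a b)"
  let ?L0 = "?LN * ?DB + ?NB * ?LD"
  have K: "K \<ge> 0" using pb(1) idx_c[of d H] unfolding pbox_def by force
  have P0: "P \<ge> 0" using p_bdd[OF cube_pt[OF ab]] abs_ge_zero order_trans by blast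
  have e0: "?e \<ge> 0" by (rule nm_nonneg)
  have Fb0: "Fb \<ge> 0" using Fb[OF cube_pt[OF ab]] abs_ge_zero order_trans by blast
  have Z0: "?Z \<ge> 0" unfolding ZB_def using K AA_nonneg[of a b] by simp
  have E0: "EB d a b \<ge> 0" using EB_pos[of d a b] by simp
  have hS: "\<And>u. \<bar>u\<bar> \<le> ?Z \<Longrightarrow> \<bar>relu u\<bar> \<le> ?Z" using relu_abs order_trans by blast
  have hI: "\<And>u. \<bar>u\<bar> \<le> ?Z \<Longrightarrow> \<bar>ind u\<bar> \<le> 1" using ind_abs by blast
  define Bf where "Bf y = 2 * P * (?L0 * ?e + ?M0 * (\<Sum>i=1..H. indicator (Dset d H a b \<phi> \<psi> i) y))" for y
  have pt: "\<bar>2 * (NN d H relu \<phi> y - f y) * DN d H relu ind \<phi> k y * p y - 2 * (NN d H relu \<psi> y - f y) * DN d H relu ind \<psi> k y * p y\<bar>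
      \<le> Bf y" if y: "y \<in> cube d a b" for y
  proof -
    have n1: "\<bar>NN d H relu \<phi> y - NN d H relu \<psi> y\<bar> \<le> ?LN * ?e" by (rule NN_lip[OF pb y])
    have n2: "\<bar>NN d H relu \<psi> y - f y\<bar> \<le> ?NB"
      using Fb[OF y] NN_bound[of d H K \<psi> y a b relu ?Z, OF pb(2) y hS] by linarith
    have d1: "\<bar>DN d H relu ind \<phi> k y\<bar> \<le> ?DB" by (rule DN_bound[of d H K \<phi> y a b relu ?Z ind 1, OF pb(1) y hS hI])
    have d2: "\<bar>DN d H relu ind \<phi> k y - DN d H relu ind \<psi> k y\<bar> \<le> ?LD * ?e + K * EB d a b * (\<Sum>i=1..H. indicator (Dset d H a b \<phi> \<psi> i) y)"
      by (rule DN_lip[OF pb y])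
    have s0: "(\<Sum>i=1..H. indicator (Dset d H a b \<phi> \<psi> i) y) \<ge> (0::real)" by (simp add: sum_nonneg)
    have eq: "2 * (NN d H relu \<phi> y - f y) * DN d H relu ind \<phi> k y * p y - 2 * (NN d H relu \<psi> y - f y) * DN d H relu ind \<psi> k y * p y
      = 2 * p y * ((NN d H relu \<phi> y - NN d H relu \<psi> y) * DN d H relu ind \<phi> k y + (NN d H relu \<psi> y - f y) * (DN d H relu ind \<phi> k y - DN d H relu ind \<psi> k y))"
      by (simp add: algebra_simps)
    have t1: "\<bar>(NN d H relu \<phi> y - NN d H relu \<psi> y) * DN d H relu ind \<phi> k y\<bar> \<le> ?LN * ?e * ?DB"
      unfolding abs_mult by (intro mult_mono n1 d1) (use e0 E0 K Z0 in auto)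
    have t2: "\<bar>(NN d H relu \<psi> y - f y) * (DN d H relu ind \<phi> k y - DN d H relu ind \<psi> k y)\<bar>
        \<le> ?NB * (?LD * ?e + K * EB d a b * (\<Sum>i=1..H. indicator (Dset d H a b \<phi> \<psi> i) y))"
      unfolding abs_mult by (intro mult_mono n2 d2) (use e0 E0 K s0 Fb0 Z0 in auto)
    have "\<bar>(NN d H relu \<phi> y - NN d H relu \<psi> y) * DN d H relu ind \<phi> k y + (NN d H relu \<psi> y - f y) * (DN d H relu ind \<phi> k y - DN d H relu ind \<psi> k y)\<bar>
       \<le> ?L0 * ?e + ?M0 * (\<Sum>i=1..H. indicator (Dset d H a b \<phi> \<psi> i) y)"
    proof -
      have "\<bar>(NN d H relu \<phi> y - NN d H relu \<psi> y) * DN d H relu ind \<phi> k y + (NN d H relu \<psi> y - f y) * (DN d H relu ind \<phi> k y - DN d H relu ind \<psi> k y)\<bar>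
        \<le> ?LN * ?e * ?DB + ?NB * (?LD * ?e + K * EB d a b * (\<Sum>i=1..H. indicator (Dset d H a b \<phi> \<psi> i) y))"
        by (rule order_trans[OF abs_triangle_ineq add_mono[OF t1 t2]])
      also have "\<dots> = ?L0 * ?e + ?M0 * (\<Sum>i=1..H. indicator (Dset d H a b \<phi> \<psi> i) y)"
        by (simp add: algebra_simps)
      finally show ?thesis .
    qed
    moreover have "\<bar>2 * p y\<bar> \<le> 2 * P" using p_bdd[OF y] by simp
    ultimately show ?thesis unfolding eq Bf_def abs_mult[of "2 * p y"]
      by (intro mult_mono) auto
  qed
  have i\<phi>: "integrable (MC d a b) (\<lambda>y. 2 * (NN d H relu \<phi> y - f y) * DN d H relu ind \<phi> k y * p y)"
    by (rule GS_integrable[OF f_cont p_meas p_bdd Fb pb(1)])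
  have i\<psi>: "integrable (MC d a b) (\<lambda>y. 2 * (NN d H relu \<psi> y - f y) * DN d H relu ind \<psi> k y * p y)"
    by (rule GS_integrable[OF f_cont p_meas p_bdd Fb pb(2)])
  have iD: "integrable (MC d a b) (indicator (Dset d H a b \<phi> \<psi> i) :: _ \<Rightarrow> real)" for i
    by (rule bounded_integrable[where B=1]) (auto intro: borel_measurable_indicator Dset_sets_MC split: split_indicator)
  let ?S = "\<lambda>y. (\<Sum>i=1..H. indicator (Dset d H a b \<phi> \<psi> i) y) :: real"
  have iS: "integrable (MC d a b) ?S" using iD by (intro Bochner_Integration.integrable_sum) auto
  have ic: "integrable (MC d a b) (\<lambda>_. ?L0 * ?e)" by (rule finite_measure.integrable_const[OF finite_MC])
  have iB: "integrable (MC d a b) Bf" unfolding Bf_def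
    by (intro integrable_mult_right Bochner_Integration.integrable_add ic iS)
  have eqG: "GS d H a b f p \<phi> k - GS d H a b f p \<psi> k = (\<integral>y. 2 * (NN d H relu \<phi> y - f y) * DN d H relu ind \<phi> k y * p y - 2 * (NN d H relu \<psi> y - f y) * DN d H relu ind \<psi> k y * p y \<partial>MC d a b)"
    unfolding GS_def using i\<phi> i\<psi> by simp
  have bnd: "\<bar>\<integral>y. 2 * (NN d H relu \<phi> y - f y) * DN d H relu ind \<phi> k y * p y - 2 * (NN d H relu \<psi> y - f y) * DN d H relu ind \<psi> k y * p y \<partial>MC d a b\<bar> \<le> integral\<^sup>L (MC d a b) Bf"
  proof (rule abs_integral_le[OF _ iB])
    show "integrable (MC d a b) (\<lambda>y. 2 * (NN d H relu \<phi> y - f y) * DN d H relu ind \<phi> k y * p y - 2 * (NN d H relu \<psi> y - f y) * DN d H relu ind \<psi> k y * p y)"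
      using i\<phi> i\<psi> by (rule Bochner_Integration.integrable_diff)
    fix y assume "y \<in> space (MC d a b)"
    then have "y \<in> cube d a b" by (simp only: space_MC)
    then show "\<bar>2 * (NN d H relu \<phi> y - f y) * DN d H relu ind \<phi> k y * p y - 2 * (NN d H relu \<psi> y - f y) * DN d H relu ind \<psi> k y * p y\<bar> \<le> Bf y"
      by (rule pt)
  qed
  have ib: "integral\<^sup>L (MC d a b) Bf = 2 * P * (?L0 * ?e * measure (MC d a b) (space (MC d a b)) + ?M0 * (\<Sum>i=1..H. measure (MC d a b) (Dset d H a b \<phi> \<psi> i)))"
  proof -
    have s1: "integral\<^sup>L (MC d a b) Bf = 2 * P * integral\<^sup>L (MC d a b) (\<lambda>y. ?L0 * ?e + ?M0 * ?S y)"
      unfolding Bf_def by (rule integral_mult_right_zero)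
    have s2: "integral\<^sup>L (MC d a b) (\<lambda>y. ?L0 * ?e + ?M0 * ?S y) = integral\<^sup>L (MC d a b) (\<lambda>_. ?L0 * ?e) + integral\<^sup>L (MC d a b) (\<lambda>y. ?M0 * ?S y)"
      by (rule Bochner_Integration.integral_add[OF ic integrable_mult_right[OF iS]])
    have s3: "integral\<^sup>L (MC d a b) (\<lambda>_. ?L0 * ?e) = ?L0 * ?e * measure (MC d a b) (space (MC d a b))"
      by simp
    have s4: "integral\<^sup>L (MC d a b) (\<lambda>y. ?M0 * ?S y) = ?M0 * (\<Sum>i=1..H. integral\<^sup>L (MC d a b) (indicator (Dset d H a b \<phi> \<psi> i)))"
    proof -
      have "integral\<^sup>L (MC d a b) ?S = (\<Sum>i=1..H. integral\<^sup>L (MC d a b) (indicator (Dset d H a b \<phi> \<psi> i)))"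
        by (rule Bochner_Integration.integral_sum) (rule iD)
      then show ?thesis by (simp only: integral_mult_right_zero)
    qed
    have s5: "integral\<^sup>L (MC d a b) (indicator (Dset d H a b \<phi> \<psi> i)) = measure (MC d a b) (Dset d H a b \<phi> \<psi> i)" for i
      using sets.sets_into_space[OF Dset_sets_MC[of d H a b \<phi> \<psi> i]] by (simp add: Int_absorb2)
    show ?thesis unfolding s1 s2 s3 s4 s5 ..
  qed
  have le: "2 * P * (?L0 * ?e * measure (MC d a b) (space (MC d a b)) + ?M0 * (\<Sum>i=1..H. measure (MC d a b) (Dset d H a b \<phi> \<psi> i))) \<le> 2 * P * (?L0 * ?e * measure (lebd d) (cube d a b) + ?M0 * (\<Sum>i=1..H. C * ?e))"
  proof -
    have ms: "measure (MC d a b) (space (MC d a b)) = measure (lebd d) (cube d a b)"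
      unfolding space_MC using cube_sets[of d a b] cube_sub[of d a b]
      by (intro measure_restrict_space) (auto simp: Int_absorb2)
    have "(\<Sum>i=1..H. measure (MC d a b) (Dset d H a b \<phi> \<psi> i)) \<le> (\<Sum>i=1..H. C * ?e)"
      using Dm C0 e0 by (intro sum_mono measure_Dset) auto
    moreover have "?M0 \<ge> 0" using K E0 Fb0 Z0 by simp
    ultimately show ?thesis unfolding ms using P0 by (intro mult_left_mono add_left_mono) auto
  qed
  have fin: "2 * P * (?L0 * ?e * measure (lebd d) (cube d a b) + ?M0 * (\<Sum>i=1..H. C * ?e)) = (2 * P * (?L0 * measure (lebd d) (cube d a b) + ?M0 * (real H * C))) * ?e"
    by (simp add: algebra_simps)
  show ?thesis unfolding eqG using bnd ib le fin by linarith
qed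


lemma nm_cont:
  assumes "\<forall>m\<in>{1..n}. continuous_on S (\<lambda>t. X t m)" "\<forall>m\<in>{1..n}. continuous_on S (\<lambda>t. Y t m)"
  shows "continuous_on S (\<lambda>t. nm n (X t) (Y t))"
  unfolding nm_def using assms by (intro continuous_on_sum continuous_on_rabs continuous_on_diff) auto

lemma local_zero:
  fixes \<Theta>1 \<Theta>2 :: "real \<Rightarrow> nat \<Rightarrow> real" and Gf :: "(nat \<Rightarrow> real) \<Rightarrow> nat \<Rightarrow> real"
  assumes cont: "continuous_on {0..} (\<lambda>t. nm n (\<Theta>1 t) (\<Theta>2 t))"
    and ode1: "\<forall>t\<ge>0. \<forall>m\<in>{1..n}. set_integrable lborel {0..t} (\<lambda>u. Gf (\<Theta>1 u) m) \<and>
        \<Theta>1 t m = \<theta> m - set_lebesgue_integral lborel {0..t} (\<lambda>u. Gf (\<Theta>1 u) m)"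
    and ode2: "\<forall>t\<ge>0. \<forall>m\<in>{1..n}. set_integrable lborel {0..t} (\<lambda>u. Gf (\<Theta>2 u) m) \<and>
        \<Theta>2 t m = \<theta> m - set_lebesgue_integral lborel {0..t} (\<lambda>u. Gf (\<Theta>2 u) m)"
    and t0: "t0 \<ge> 0" and eq: "\<forall>u\<in>{0..t0}. \<Theta>1 u = \<Theta>2 u"
    and \<eta>: "\<eta> > 0" and L0: "L \<ge> 0"
    and lip: "\<forall>s. t0 \<le> s \<longrightarrow> s < t0 + \<eta> \<longrightarrow> (\<forall>m\<in>{1..n}. \<bar>Gf (\<Theta>1 s) m - Gf (\<Theta>2 s) m\<bar> \<le> L * nm n (\<Theta>1 s) (\<Theta>2 s))"
  shows "\<exists>\<tau>>0. \<forall>s\<in>{t0..t0+\<tau>}. nm n (\<Theta>1 s) (\<Theta>2 s) = 0"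
proof -
  define e where "e s = nm n (\<Theta>1 s) (\<Theta>2 s)" for s
  define \<tau> where "\<tau> = min (\<eta>/2) (1 / (2 * (real n * L + 1)))"
  have nL0: "real n * L \<ge> 0" using L0 by simp
  have \<tau>0: "\<tau> > 0" unfolding \<tau>_def using \<eta> nL0 by auto
  have \<tau>\<eta>: "\<tau> < \<eta>" unfolding \<tau>_def using \<eta> by auto
  have nL\<tau>: "real n * L * \<tau> \<le> 1/2"
  proof -
    have "\<tau> \<le> 1 / (2 * (real n * L + 1))" unfolding \<tau>_def by simp
    then have "real n * L * \<tau> \<le> real n * L * (1 / (2 * (real n * L + 1)))" using nL0 by (intro mult_left_mono)
    also have "\<dots> \<le> 1/2" using nL0 by (simp add: field_simps)
    finally show ?thesis .
  qed
  have e0: "e s \<ge> 0" for s unfolding e_def by (rule nm_nonneg)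
  obtain tm where tm: "tm \<in> {t0..t0+\<tau>}" and tmax: "\<And>s. s \<in> {t0..t0+\<tau>} \<Longrightarrow> e s \<le> e tm"
    using continuous_attains_sup[of "{t0..t0+\<tau>}" e] continuous_on_subset[OF cont, of "{t0..t0+\<tau>}"] \<tau>0 t0
    unfolding e_def by fastforce
  define M where "M = e tm"
  have M0: "M \<ge> 0" unfolding M_def by (rule e0)
  have comp: "\<bar>\<Theta>1 t m - \<Theta>2 t m\<bar> \<le> L * M * \<tau>" if t: "t \<in> {t0..t0+\<tau>}" and m: "m \<in> {1..n}" for t m
  proof -
    have tt: "t \<ge> 0" using t t0 by auto
    define h where "h u = Gf (\<Theta>1 u) m - Gf (\<Theta>2 u) m" for u
    have i1: "set_integrable lborel {0..t} (\<lambda>u. Gf (\<Theta>1 u) m)" using ode1 tt m by auto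
    have i2: "set_integrable lborel {0..t} (\<lambda>u. Gf (\<Theta>2 u) m)" using ode2 tt m by auto
    have "\<Theta>1 t m - \<Theta>2 t m = - (set_lebesgue_integral lborel {0..t} (\<lambda>u. Gf (\<Theta>1 u) m) - set_lebesgue_integral lborel {0..t} (\<lambda>u. Gf (\<Theta>2 u) m))"
      using ode1 ode2 tt m by auto
    also have "\<dots> = - set_lebesgue_integral lborel {0..t} h"
      unfolding h_def using set_integral_diff(2)[OF i1 i2] by simp
    finally have th: "\<bar>\<Theta>1 t m - \<Theta>2 t m\<bar> = \<bar>integral\<^sup>L lborel (\<lambda>u. indicator {0..t} u *\<^sub>R h u)\<bar>"
      unfolding set_lebesgue_integral_def by simp
    have ih: "integrable lborel (\<lambda>u. indicator {0..t} u *\<^sub>R h u)"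
      using set_integral_diff(1)[OF i1 i2] unfolding h_def set_integrable_def .
    have iB: "integrable lborel (\<lambda>u. indicator {t0..t} u * (L * M))"
      by (intro integrable_mult_left integrable_real_indicator) (auto simp: emeasure_lborel_Icc_eq)
    have "\<bar>integral\<^sup>L lborel (\<lambda>u. indicator {0..t} u *\<^sub>R h u)\<bar> \<le> integral\<^sup>L lborel (\<lambda>u. indicator {t0..t} u * (L * M))"
    proof (rule abs_integral_le[OF ih iB])
      fix u :: real
      show "\<bar>indicator {0..t} u *\<^sub>R h u\<bar> \<le> indicator {t0..t} u * (L * M)"
      proof (cases "u \<in> {0..t}")
        case False then show ?thesis using L0 M0 by (auto split: split_indicator)
      next
        case True
        show ?thesis
        proof (cases "u \<le> t0")
          case True
          then have "\<Theta>1 u = \<Theta>2 u" using eq \<open>u \<in> {0..t}\<close> by auto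
          then show ?thesis unfolding h_def using L0 M0 by (auto split: split_indicator)
        next
          case False
          then have ut: "u \<in> {t0..t}" using \<open>u \<in> {0..t}\<close> by auto
          have "\<bar>h u\<bar> \<le> L * e u" unfolding h_def e_def using lip ut t \<tau>\<eta> m by auto
          also have "\<dots> \<le> L * M" unfolding M_def using tmax[of u] ut t L0 by (intro mult_left_mono) auto
          finally show ?thesis using ut \<open>u \<in> {0..t}\<close> by simp
        qed
      qed
    qed
    also have "integral\<^sup>L lborel (\<lambda>u. indicator {t0..t} u * (L * M)) = (t - t0) * (L * M)"
      using t by simp
    also have "\<dots> \<le> \<tau> * (L * M)" using t L0 M0 by (intro mult_right_mono) auto
    finally show ?thesis using th by (simp add: algebra_simps)
  qed
  have eb: "e t \<le> M / 2" if t: "t \<in> {t0..t0+\<tau>}" for t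
  proof -
    have "e t \<le> (\<Sum>m=1..n. L * M * \<tau>)" unfolding e_def nm_def by (intro sum_mono comp[OF t]) auto
    also have "\<dots> = (real n * L * \<tau>) * M" by simp
    also have "\<dots> \<le> (1/2) * M" by (intro mult_right_mono nL\<tau> M0)
    finally show ?thesis by simp
  qed
  have "M \<le> M / 2" using eb[OF tm] unfolding M_def .
  then have M00: "M = 0" using M0 by simp
  show ?thesis
  proof (intro exI[of _ \<tau>] conjI \<tau>0 ballI)
    fix s assume s: "s \<in> {t0..t0+\<tau>}"
    show "nm n (\<Theta>1 s) (\<Theta>2 s) = 0" using tmax[OF s] e0[of s] M00 unfolding M_def e_def by simp
  qed
qed


lemma set_integral_00: "set_lebesgue_integral lborel {0..0::real} g = (0::real)"
  unfolding set_lebesgue_integral_def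
  by (rule integral_eq_zero_AE) (use AE_lborel_singleton[of "0::real"] in \<open>auto elim!: eventually_mono\<close>)

lemma uniq_generic:
  fixes \<Theta>1 \<Theta>2 :: "real \<Rightarrow> nat \<Rightarrow> real" and Gf :: "(nat \<Rightarrow> real) \<Rightarrow> nat \<Rightarrow> real"
  assumes c1: "\<forall>m\<in>{1..n}. continuous_on {0..} (\<lambda>t. \<Theta>1 t m)"
    and c2: "\<forall>m\<in>{1..n}. continuous_on {0..} (\<lambda>t. \<Theta>2 t m)"
    and sp: "\<forall>t\<ge>0. \<Theta>1 t \<in> param_space n \<and> \<Theta>2 t \<in> param_space n"
    and ode1: "\<forall>t\<ge>0. \<forall>m\<in>{1..n}. set_integrable lborel {0..t} (\<lambda>u. Gf (\<Theta>1 u) m) \<and>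
        \<Theta>1 t m = \<theta> m - set_lebesgue_integral lborel {0..t} (\<lambda>u. Gf (\<Theta>1 u) m)"
    and ode2: "\<forall>t\<ge>0. \<forall>m\<in>{1..n}. set_integrable lborel {0..t} (\<lambda>u. Gf (\<Theta>2 u) m) \<and>
        \<Theta>2 t m = \<theta> m - set_lebesgue_integral lborel {0..t} (\<lambda>u. Gf (\<Theta>2 u) m)"
    and loc: "\<forall>t0\<ge>0. (\<forall>u\<in>{0..t0}. \<Theta>1 u = \<Theta>2 u) \<longrightarrow> (\<exists>\<eta>>0. \<exists>L\<ge>0. \<forall>s. t0 \<le> s \<longrightarrow> s < t0 + \<eta> \<longrightarrow>
        (\<forall>m\<in>{1..n}. \<bar>Gf (\<Theta>1 s) m - Gf (\<Theta>2 s) m\<bar> \<le> L * nm n (\<Theta>1 s) (\<Theta>2 s)))"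
  shows "\<forall>t\<ge>0. \<Theta>1 t = \<Theta>2 t"
proof -
  define e where "e s = nm n (\<Theta>1 s) (\<Theta>2 s)" for s
  have econt: "continuous_on {0..} e" unfolding e_def by (rule nm_cont[OF c1 c2])
  have e0: "e s \<ge> 0" for s unfolding e_def by (rule nm_nonneg)
  have eq_of: "\<Theta>1 t = \<Theta>2 t" if "t \<ge> 0" "e t = 0" for t
  proof
    fix m
    show "\<Theta>1 t m = \<Theta>2 t m"
    proof (cases "m \<in> {1..n}")
      case True
      then have "\<bar>\<Theta>1 t m - \<Theta>2 t m\<bar> \<le> e t" unfolding e_def by (rule nm_comp)
      then show ?thesis using that by simp
    next
      case False
      then show ?thesis using sp that(1) unfolding param_space_def by auto
    qed
  qed
  have ez: "e 0 = 0"
  proof -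
    have "\<Theta>1 0 m = \<Theta>2 0 m" if "m \<in> {1..n}" for m
      using ode1 ode2 that set_integral_00 by auto
    then show ?thesis unfolding e_def nm_def by simp
  qed
  show ?thesis
  proof (rule ccontr)
    assume "\<not> (\<forall>t\<ge>0. \<Theta>1 t = \<Theta>2 t)"
    then obtain t1 where t1: "t1 \<ge> 0" "\<Theta>1 t1 \<noteq> \<Theta>2 t1" by auto
    define S where "S = {t. 0 \<le> t \<and> e t \<noteq> 0}"
    have t1S: "t1 \<in> S" unfolding S_def using t1 eq_of by auto
    have Sne: "S \<noteq> {}" using t1S by auto
    have Sbdd: "bdd_below S" unfolding S_def by (rule bdd_belowI[of _ 0]) auto
    define t0 where "t0 = Inf S"
    have t00: "t0 \<ge> 0" unfolding t0_def using Sne by (intro cInf_greatest) (auto simp: S_def)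
    have below: "e u = 0" if "0 \<le> u" "u < t0" for u
    proof (rule ccontr)
      assume "e u \<noteq> 0"
      then have "u \<in> S" using that unfolding S_def by auto
      then have "t0 \<le> u" unfolding t0_def using Sbdd by (rule cInf_lower)
      then show False using that by simp
    qed
    have et0: "e t0 = 0"
    proof (cases "t0 = 0")
      case True then show ?thesis using ez by simp
    next
      case False
      then have tp: "t0 > 0" using t00 by simp
      show ?thesis
      proof (rule ccontr)
        assume ne: "e t0 \<noteq> 0"
        then have epos: "e t0 > 0" using e0[of t0] by simp
        obtain \<delta> where \<delta>: "\<delta> > 0" "\<forall>x'\<in>{0..}. dist x' t0 < \<delta> \<longrightarrow> dist (e x') (e t0) < e t0"
          using econt t00 epos unfolding continuous_on_iff by (metis atLeast_iff)
        define u where "u = max 0 (t0 - \<delta>/2)"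
        have u: "0 \<le> u" "u < t0" "dist u t0 < \<delta>" unfolding u_def using \<delta>(1) tp by (auto simp: dist_real_def)
        have "dist (e u) (e t0) < e t0" using \<delta>(2) u by auto
        then show False using below[OF u(1,2)] by (simp add: dist_real_def)
      qed
    qed
    have eqs: "\<forall>u\<in>{0..t0}. \<Theta>1 u = \<Theta>2 u"
    proof
      fix u assume u: "u \<in> {0..t0}"
      show "\<Theta>1 u = \<Theta>2 u"
      proof (cases "u = t0")
        case True then show ?thesis using eq_of et0 t00 by simp
      next
        case False then show ?thesis using eq_of below u by auto
      qed
    qed
    obtain \<eta> L where \<eta>: "\<eta> > 0" "L \<ge> 0" and lip: "\<forall>s. t0 \<le> s \<longrightarrow> s < t0 + \<eta> \<longrightarrow>
        (\<forall>m\<in>{1..n}. \<bar>Gf (\<Theta>1 s) m - Gf (\<Theta>2 s) m\<bar> \<le> L * nm n (\<Theta>1 s) (\<Theta>2 s))"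
      using loc t00 eqs by blast
    obtain \<tau> where \<tau>: "\<tau> > 0" and zero: "\<forall>s\<in>{t0..t0+\<tau>}. nm n (\<Theta>1 s) (\<Theta>2 s) = 0"
      using local_zero[OF nm_cont[OF c1 c2] ode1 ode2 t00 eqs \<eta>(1,2) lip] by blast
    have "t0 < t0 + \<tau>" using \<tau> by simp
    then obtain s where s: "s \<in> S" "s < t0 + \<tau>" unfolding t0_def using cInf_less_iff[OF Sne Sbdd] by blast
    have "t0 \<le> s" unfolding t0_def using s(1) Sbdd by (rule cInf_lower)
    then have "e s = 0" using zero s(2) unfolding e_def by auto
    then show False using s(1) unfolding S_def by auto
  qed
qed


theorem lemma3p2:
  fixes d H :: nat and a b :: real
    and f p :: "(nat \<Rightarrow> real) \<Rightarrow> real"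
    and R :: "nat \<Rightarrow> real \<Rightarrow> real"
    and G :: "(nat \<Rightarrow> real) \<Rightarrow> nat \<Rightarrow> real"
    and \<theta> :: "nat \<Rightarrow> real"
    and \<Theta> :: "nat \<Rightarrow> real \<Rightarrow> (nat \<Rightarrow> real)"
  assumes d_pos: "d \<ge> 1" and H_pos: "H \<ge> 1" and ab: "a < b"
    and f_cont: "continuous_on (cube d a b) f"
    and p_meas: "p \<in> borel_measurable (restrict_space (lebd d) (cube d a b))"
    and p_bdd: "bounded (p ` cube d a b)"
    and p_nonneg: "\<forall>y\<in>cube d a b. p y \<ge> 0"
    and R_C1: "\<forall>r\<ge>1. (\<forall>x. R r differentiable (at x)) \<and> continuous_on UNIV (deriv (R r))"
    and R_lim: "\<forall>x. (\<lambda>r. \<bar>R r x - max x 0\<bar> + \<bar>deriv (R r) x - indicator {0<..} x\<bar>)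
                     \<longlonglongrightarrow> 0"
    and R_bdd: "\<forall>x. \<exists>C. \<forall>r\<ge>1. \<forall>y\<in>{-\<bar>x\<bar>..\<bar>x\<bar>}. \<bar>deriv (R r) y\<bar> \<le> C"
    and G_def: "\<forall>\<phi>\<in>param_space (pdim d H).
        (\<exists>g. \<forall>i\<in>{1..pdim d H}.
            (\<lambda>r. grad (smooth_risk d H a b f p (R r)) \<phi> i) \<longlonglongrightarrow> g i) \<longrightarrow>
        (\<forall>i\<in>{1..pdim d H}.
            (\<lambda>r. grad (smooth_risk d H a b f p (R r)) \<phi> i) \<longlonglongrightarrow> G \<phi> i)"
    and \<theta>_sp: "\<theta> \<in> param_space (pdim d H)"
    and \<Theta>_sp: "\<forall>k\<in>{1,2}. \<forall>t\<ge>0. \<Theta> k t \<in> param_space (pdim d H)"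
    and \<Theta>_cont: "\<forall>k\<in>{1,2}. \<forall>i\<in>{1..pdim d H}. continuous_on {0..} (\<lambda>t. \<Theta> k t i)"
    and \<Theta>_ode: "\<forall>k\<in>{1,2}. \<forall>t\<ge>0. \<forall>i\<in>{1..pdim d H}.
        set_integrable lborel {0..t} (\<lambda>u. G (\<Theta> k u) i) \<and>
        \<Theta> k t i = \<theta> i - set_lebesgue_integral lborel {0..t} (\<lambda>u. G (\<Theta> k u) i)"
    and \<Theta>_degen: "\<forall>k\<in>{1,2}. \<forall>t\<ge>0. \<forall>s\<ge>t.
        degen d H (\<Theta> k t) \<subseteq> degen d H (\<Theta> k s)"
  shows "\<forall>t\<ge>0. \<Theta> 1 t = \<Theta> 2 t"
proof -
  let ?n = "pdim d H"
  have ab': "a \<le> b" using ab by simp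
  obtain P where P: "\<And>y. y \<in> cube d a b \<Longrightarrow> \<bar>p y\<bar> \<le> P"
    using p_bdd unfolding bounded_iff by auto
  obtain Fb where Fb: "\<And>y. y \<in> cube d a b \<Longrightarrow> \<bar>f y\<bar> \<le> Fb"
    using cont_bounded_cube[OF f_cont] by blast
  have GGS: "G \<phi> k = GS d H a b f p \<phi> k" if \<phi>: "\<phi> \<in> param_space ?n" and k: "k \<in> {1..?n}" for \<phi> k
  proof -
    have lim: "\<And>i. i \<in> {1..?n} \<Longrightarrow> (\<lambda>r. grad (smooth_risk d H a b f p (R r)) \<phi> i) \<longlonglongrightarrow> GS d H a b f p \<phi> i"
      unfolding GS_def by (rule grad_limit[OF f_cont p_meas P R_C1 R_lim R_bdd])
    then have "\<forall>i\<in>{1..?n}. (\<lambda>r. grad (smooth_risk d H a b f p (R r)) \<phi> i) \<longlonglongrightarrow> G \<phi> i"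
      using G_def \<phi> by blast
    then show ?thesis using lim[OF k] k LIMSEQ_unique by blast
  qed
  show ?thesis
  proof (rule uniq_generic[where n="?n" and Gf=G and \<theta>=\<theta>])
    show "\<forall>m\<in>{1..?n}. continuous_on {0..} (\<lambda>t. \<Theta> 1 t m)" using \<Theta>_cont by simp
    show "\<forall>m\<in>{1..?n}. continuous_on {0..} (\<lambda>t. \<Theta> 2 t m)" using \<Theta>_cont by simp
    show "\<forall>t\<ge>0. \<Theta> 1 t \<in> param_space ?n \<and> \<Theta> 2 t \<in> param_space ?n" using \<Theta>_sp by simp
    show "\<forall>t\<ge>0. \<forall>m\<in>{1..?n}. set_integrable lborel {0..t} (\<lambda>u. G (\<Theta> 1 u) m) \<and>
        \<Theta> 1 t m = \<theta> m - set_lebesgue_integral lborel {0..t} (\<lambda>u. G (\<Theta> 1 u) m)" using \<Theta>_ode by simp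
    show "\<forall>t\<ge>0. \<forall>m\<in>{1..?n}. set_integrable lborel {0..t} (\<lambda>u. G (\<Theta> 2 u) m) \<and>
        \<Theta> 2 t m = \<theta> m - set_lebesgue_integral lborel {0..t} (\<lambda>u. G (\<Theta> 2 u) m)" using \<Theta>_ode by simp
    show "\<forall>t0\<ge>0. (\<forall>u\<in>{0..t0}. \<Theta> 1 u = \<Theta> 2 u) \<longrightarrow> (\<exists>\<eta>>0. \<exists>L\<ge>0. \<forall>s. t0 \<le> s \<longrightarrow> s < t0 + \<eta> \<longrightarrow>
        (\<forall>m\<in>{1..?n}. \<bar>G (\<Theta> 1 s) m - G (\<Theta> 2 s) m\<bar> \<le> L * nm ?n (\<Theta> 1 s) (\<Theta> 2 s)))"
    proof (intro allI impI)
      fix t0 :: real assume t00: "t0 \<ge> 0" and eqs: "\<forall>u\<in>{0..t0}. \<Theta> 1 u = \<Theta> 2 u"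
      define \<theta>0 where "\<theta>0 = \<Theta> 1 t0"
      have th2: "\<Theta> 2 t0 = \<theta>0" unfolding \<theta>0_def using eqs t00 by auto
      obtain \<delta> C where \<delta>: "\<delta> > 0" and C0: "C \<ge> 0" and DM: "\<forall>\<phi> \<psi>. nm ?n \<theta>0 \<phi> \<le> \<delta> \<longrightarrow> nm ?n \<theta>0 \<psi> \<le> \<delta> \<longrightarrow>
         (\<forall>i\<in>degen d H \<theta>0. i \<in> degen d H \<phi> \<and> i \<in> degen d H \<psi>) \<longrightarrow>
         (\<forall>i\<in>{1..H}. emeasure (lebd d) (Dset d H a b \<phi> \<psi> i) \<le> ennreal (C * nm ?n \<phi> \<psi>))"
        using all_Dset[OF ab, of d H \<theta>0] by blast
      define K where "K = (\<Sum>m=1..?n. \<bar>\<theta>0 m\<bar>) + \<delta>"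
      define L where "L = (2 * P * (((1 + real H * (ZB d a b K + K * EB d a b)) * DB d H a b K (ZB d a b K) 1
              + (K + real H * (K * ZB d a b K) + Fb) * (2 * real H * EB d a b)) * measure (lebd d) (cube d a b)
         + (K + real H * (K * ZB d a b K) + Fb) * (K * EB d a b) * (real H * C)))"
      have near: "\<exists>\<eta>>0. \<forall>s\<in>{0..}. dist s t0 < \<eta> \<longrightarrow> nm ?n \<theta>0 (\<Theta> k s) < \<delta>" if k: "k \<in> {1,2}" for k
      proof -
        have cc: "continuous_on {0..} (\<lambda>t. nm ?n ((\<lambda>_. \<theta>0) t) (\<Theta> k t))"
          by (rule nm_cont) (use \<Theta>_cont k in auto)
        have z: "nm ?n \<theta>0 (\<Theta> k t0) = 0" using k th2 unfolding \<theta>0_def nm_def by auto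
        obtain \<eta> where "\<eta> > 0" "\<forall>s\<in>{0..}. dist s t0 < \<eta> \<longrightarrow> dist (nm ?n \<theta>0 (\<Theta> k s)) (nm ?n \<theta>0 (\<Theta> k t0)) < \<delta>"
          using cc t00 \<delta> unfolding continuous_on_iff by (metis atLeast_iff)
        then show ?thesis using z nm_nonneg by (intro exI[of _ \<eta>]) (auto simp: dist_real_def)
      qed
      obtain \<eta>1 where \<eta>1: "\<eta>1 > 0" "\<forall>s\<in>{0..}. dist s t0 < \<eta>1 \<longrightarrow> nm ?n \<theta>0 (\<Theta> 1 s) < \<delta>" using near[of 1] by auto
      obtain \<eta>2 where \<eta>2: "\<eta>2 > 0" "\<forall>s\<in>{0..}. dist s t0 < \<eta>2 \<longrightarrow> nm ?n \<theta>0 (\<Theta> 2 s) < \<delta>" using near[of 2] by auto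
      show "\<exists>\<eta>>0. \<exists>L\<ge>0. \<forall>s. t0 \<le> s \<longrightarrow> s < t0 + \<eta> \<longrightarrow>
        (\<forall>m\<in>{1..?n}. \<bar>G (\<Theta> 1 s) m - G (\<Theta> 2 s) m\<bar> \<le> L * nm ?n (\<Theta> 1 s) (\<Theta> 2 s))"
      proof (rule exI[of _ "min \<eta>1 \<eta>2"], intro conjI, use \<eta>1 \<eta>2 in simp, rule exI[of _ "max L 0"], intro conjI allI impI ballI)
        show "max L 0 \<ge> 0" by simp
        fix s m assume s1: "t0 \<le> s" and s2: "s < t0 + min \<eta>1 \<eta>2" and m: "m \<in> {1..?n}"
        have s0: "s \<ge> 0" using s1 t00 by simp
        have "dist s t0 < \<eta>1" using s1 s2 by (simp add: dist_real_def)
        then have d1: "nm ?n \<theta>0 (\<Theta> 1 s) \<le> \<delta>" using \<eta>1(2) s0 by (simp add: less_imp_le)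
        have "dist s t0 < \<eta>2" using s1 s2 by (simp add: dist_real_def)
        then have d2: "nm ?n \<theta>0 (\<Theta> 2 s) \<le> \<delta>" using \<eta>2(2) s0 by (simp add: less_imp_le)
        have dg: "\<forall>i\<in>degen d H \<theta>0. i \<in> degen d H (\<Theta> 1 s) \<and> i \<in> degen d H (\<Theta> 2 s)"
        proof -
          have g1: "degen d H (\<Theta> 1 t0) \<subseteq> degen d H (\<Theta> 1 s)" using \<Theta>_degen[rule_format, of 1 t0 s] t00 s1 by simp
          have g2: "degen d H (\<Theta> 2 t0) \<subseteq> degen d H (\<Theta> 2 s)" using \<Theta>_degen[rule_format, of 2 t0 s] t00 s1 by simp
          show ?thesis using g1 g2 th2 unfolding \<theta>0_def by auto
        qed
        have Dm: "\<forall>i\<in>{1..H}. emeasure (lebd d) (Dset d H a b (\<Theta> 1 s) (\<Theta> 2 s) i) \<le> ennreal (C * nm ?n (\<Theta> 1 s) (\<Theta> 2 s))"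
          using DM d1 d2 dg by (meson)
        have pbk: "pbox ?n K (\<Theta> k s)" if "nm ?n \<theta>0 (\<Theta> k s) \<le> \<delta>" for k
          unfolding pbox_def
        proof
          fix m' assume m': "m' \<in> {1..?n}"
          have "\<bar>\<Theta> k s m'\<bar> \<le> \<bar>\<theta>0 m'\<bar> + \<bar>\<theta>0 m' - \<Theta> k s m'\<bar>" by simp
          also have "\<dots> \<le> (\<Sum>m=1..?n. \<bar>\<theta>0 m\<bar>) + nm ?n \<theta>0 (\<Theta> k s)"
            by (intro add_mono member_le_sum nm_comp m') auto
          finally show "\<bar>\<Theta> k s m'\<bar> \<le> K" unfolding K_def using that by simp
        qed
        have sp1: "\<Theta> 1 s \<in> param_space ?n" and sp2: "\<Theta> 2 s \<in> param_space ?n" using \<Theta>_sp s0 by auto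
        have "\<bar>GS d H a b f p (\<Theta> 1 s) m - GS d H a b f p (\<Theta> 2 s) m\<bar> \<le> L * nm ?n (\<Theta> 1 s) (\<Theta> 2 s)"
          unfolding L_def by (rule GS_lip[OF ab' f_cont p_meas P Fb pbk[OF d1] pbk[OF d2] Dm C0])
        also have "\<dots> \<le> max L 0 * nm ?n (\<Theta> 1 s) (\<Theta> 2 s)" by (intro mult_right_mono nm_nonneg) simp
        finally show "\<bar>G (\<Theta> 1 s) m - G (\<Theta> 2 s) m\<bar> \<le> max L 0 * nm ?n (\<Theta> 1 s) (\<Theta> 2 s)"
          using GGS[OF sp1 m] GGS[OF sp2 m] by simp
      qed
    qed
  qed
qed


end
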